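(* Let $G\subseteq\mathrm{Cl}_n$ with probability distribution $p$ such that $S$ is invertible, let $\Lambda(g)$, $g\in G$, be quantum channels, $O$ a Hermitian observable and $\rho$ a state. Assume that $|s_{a,a'}|/(s_as_{a'})\le C$ for all $a\ne a'$ with $(O|\sigma_a)\ne0$ and $(O|\sigma_{a'})\ne0$. Then $$\bigl|\mathbb{E}(\hat o^2)-\mathbb{E}(\hat o_{\text{noise-free}}^2)\bigr|\le C\lVert O\rVert_{\mathrm{st}}^2\max_{a,b\in\mathbb{F}_2^{2n}}\lVert\mathrm{id}-\bar\Lambda_{a,b}\rVert_\diamond\le C\lVert O\rVert_{\mathrm{st}}^2\max_{g\in G}\lVert\mathrm{id}-\Lambda(g)\rVert_\diamond .$$
   Context: $d=2^n$; $(A|B)=\mathrm{Tr}(A^\dagger B)$; $\omega(g)(A)=gAg^\dagger$, $\omega(g)^\dagger(A)=g^\dagger Ag$; $E_x=|x\rangle\langle x|$, $M=\sum_x|E_x)(E_x|$ with $|A)(B|:C\mapsto(B|C)A$; $S=\sum_g p(g)\omega(g)^\dagger M\omega(g)$. Shadow protocol: $g\sim p$, apply $\omega(g)\Lambda(g)$ to $\rho$, measure computational basis obtaining $x$ with probability $\langle x|\omega(g)\Lambda(g)(\rho)|x\rangle$; estimator $\hat o(g,x)=(O|S^{-1}\omega(g)^\dagger|E_x)$. $\hat o_{\text{noise-free}}$ is the same estimator when $\Lambda(g)=\mathrm{id}$ for all $g$. Pauli operators $\sigma_a$, $a\in\mathbb{F}_2^{2n}$ ($\sigma_{00}=\mathbb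 1,\sigma_{01}=X,\sigma_{11}=Y,\sigma_{10}=Z$ per qubit); $[a,a']=0$ iff $\sigma_a,\sigma_{a'}$ commute, and then $\sigma_a\sigma_{a'}=(-1)^{\beta(a,a')}\sigma_{a+a'}$. $Z_z=\bigotimes_iZ^{z_i}$; for $g\in\mathrm{Cl}_n$, $\Xi_z(g)$ is the Pauli $\sigma_b$ with $g^\dagger Z_zg=\pm\sigma_b$. $s_a=\sum_z\sum_{g\in G:\Xi_z(g)=\sigma_a}p(g)$. For commuting $a,a'$: $r_{a,a'}=\sum_{z,z'\in\mathbb{F}_2^n}\sum_{g\in G:\Xi_z(g)=\sigma_a,\Xi_{z'}(g)=\sigma_{a'}}p(g)$, $s_{a,a'}=(-1)^{\beta(a,a')}r_{a,a'}$, and $\bar\Lambda_{a,a'}=r_{a,a'}^{-1}\sum_{z,z'}\sum_{g\in G:\Xi_z(g)=\sigma_a,\Xi_{z'}(g)=\sigma_{a'}}p(g)\Lambda(g)$ (set $\bar\Lambda_{a,a'}=\mathrm{id}$ if $r_{a,a'}=0$ or $a,a'$ anticommute). Stabilizer norm $\lVert O\rVert_{\mathrm{st}}=d^{-1}\sum_a|(\sigma_a|O)|$; $\lVert\cdot\rVert_\diamond$ diamond norm. *)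

theory Defs
  imports Complex_Main
begin

text \<open>A D x D complex matrix is represented as a function nat => nat => complex
  whose entries outside the block [0,D) x [0,D) are zero. All operations below
  truncate to that block, so they map such matrices to such matrices.\<close>

type_synonym cmat = "nat \<Rightarrow> nat \<Rightarrow> complex"
type_synonym superop = "cmat \<Rightarrow> cmat"

definition mats :: "nat \<Rightarrow> cmat set" where
  "mats D = {A. \<forall>i j. (D \<le> i \<or> D \<le> j) \<longrightarrow> A i j = 0}"

definition mmul :: "nat \<Rightarrow> cmat \<Rightarrow> cmat \<Rightarrow> cmat" where
  "mmul D A B = (\<lambda>i j. if i < D \<and> j < D then (\<Sum>k<D. A i k * B k j) else 0)"

definition adj :: "cmat \<Rightarrow> cmat" where
  "adj A = (\<lambda>i j. cnj (A j i))"

definition smul :: "complex \<Rightarrow> cmat \<Rightarrow> cmat" where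
  "smul c A = (\<lambda>i j. c * A i j)"

definition madd :: "cmat \<Rightarrow> cmat \<Rightarrow> cmat" where
  "madd A B = (\<lambda>i j. A i j + B i j)"

definition idm :: "nat \<Rightarrow> cmat" where
  "idm D = (\<lambda>i j. if i = j \<and> i < D then 1 else 0)"

definition tr :: "nat \<Rightarrow> cmat \<Rightarrow> complex" where
  "tr D A = (\<Sum>i<D. A i i)"

text \<open>Hilbert--Schmidt inner product (A|B) = Tr(A^dagger B).\<close>
definition hs :: "nat \<Rightarrow> cmat \<Rightarrow> cmat \<Rightarrow> complex" where
  "hs D A B = tr D (mmul D (adj A) B)"

definition hermitian :: "nat \<Rightarrow> cmat \<Rightarrow> bool" where
  "hermitian D A \<longleftrightarrow> A \<in> mats D \<and> adj A = A"

definition psd :: "nat \<Rightarrow> cmat \<Rightarrow> bool" where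
  "psd D A \<longleftrightarrow> A \<in> mats D \<and>
     (\<forall>v :: nat \<Rightarrow> complex. let q = (\<Sum>i<D. \<Sum>j<D. cnj (v i) * A i j * v j)
                              in Im q = 0 \<and> Re q \<ge> 0)"

definition is_state :: "nat \<Rightarrow> cmat \<Rightarrow> bool" where
  "is_state D \<rho> \<longleftrightarrow> psd D \<rho> \<and> tr D \<rho> = 1"

definition unitary :: "nat \<Rightarrow> cmat \<Rightarrow> bool" where
  "unitary D U \<longleftrightarrow> U \<in> mats D \<and> mmul D (adj U) U = idm D \<and> mmul D U (adj U) = idm D"

definition vnorm :: "nat \<Rightarrow> (nat \<Rightarrow> complex) \<Rightarrow> real" where
  "vnorm D v = sqrt (\<Sum>i<D. (cmod (v i))\<^sup>2)"

definition mvec :: "nat \<Rightarrow> cmat \<Rightarrow> (nat \<Rightarrow> complex) \<Rightarrow> (nat \<Rightarrow> complex)" where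
  "mvec D A v = (\<lambda>i. if i < D then (\<Sum>k<D. A i k * v k) else 0)"

definition opnorm :: "nat \<Rightarrow> cmat \<Rightarrow> real" where
  "opnorm D A = Sup {vnorm D (mvec D A v) | v. vnorm D v \<le> 1}"

text \<open>Trace norm, as the dual of the operator norm:
  ||X||_1 = sup { |Tr(B^dagger X)| : ||B||_op <= 1 }.\<close>
definition tnorm :: "nat \<Rightarrow> cmat \<Rightarrow> real" where
  "tnorm D X = Sup {cmod (hs D B X) | B. B \<in> mats D \<and> opnorm D B \<le> 1}"

text \<open>Phi tensor id_k on (k*d) x (k*d) matrices. Index convention: row index
  r = (ancilla index) * d + (system index).\<close>
definition block :: "nat \<Rightarrow> cmat \<Rightarrow> nat \<Rightarrow> nat \<Rightarrow> cmat" where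
  "block d X k l = (\<lambda>i j. if i < d \<and> j < d then X (k * d + i) (l * d + j) else 0)"

definition tens_id :: "nat \<Rightarrow> nat \<Rightarrow> superop \<Rightarrow> superop" where
  "tens_id d k \<Phi> X = (\<lambda>r c. if r < k * d \<and> c < k * d
        then \<Phi> (block d X (r div d) (c div d)) (r mod d) (c mod d) else 0)"

definition diamond :: "nat \<Rightarrow> superop \<Rightarrow> real" where
  "diamond d \<Phi> = Sup {tnorm (d * d) (tens_id d d \<Phi> X) | X. X \<in> mats (d * d) \<and> tnorm (d * d) X \<le> 1}"

definition lin_superop :: "nat \<Rightarrow> superop \<Rightarrow> bool" where
  "lin_superop d \<Phi> \<longleftrightarrow> (\<forall>A\<in>mats d. \<Phi> A \<in> mats d) \<and>
     (\<forall>A\<in>mats d. \<forall>B\<in>mats d. \<forall>c. \<Phi> (madd A (smul c B)) = madd (\<Phi> A) (smul c (\<Phi> B)))"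

definition completely_positive :: "nat \<Rightarrow> superop \<Rightarrow> bool" where
  "completely_positive d \<Phi> \<longleftrightarrow>
     (\<forall>k X. psd (k * d) X \<longrightarrow> psd (k * d) (tens_id d k \<Phi> X))"

definition trace_preserving :: "nat \<Rightarrow> superop \<Rightarrow> bool" where
  "trace_preserving d \<Phi> \<longleftrightarrow> (\<forall>A\<in>mats d. tr d (\<Phi> A) = tr d A)"

definition quantum_channel :: "nat \<Rightarrow> superop \<Rightarrow> bool" where
  "quantum_channel d \<Phi> \<longleftrightarrow> lin_superop d \<Phi> \<and> completely_positive d \<Phi> \<and> trace_preserving d \<Phi>"

text \<open>Qubit i corresponds to bit i of a computational basis index.\<close>
definition bitv :: "nat \<Rightarrow> nat \<Rightarrow> nat" where
  "bitv i r = r div 2 ^ i mod 2"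

text \<open>Single-qubit Pauli indexed by (z,x): 00 = 1, 01 = X, 11 = Y, 10 = Z.\<close>
fun pauli1 :: "bool \<times> bool \<Rightarrow> nat \<Rightarrow> nat \<Rightarrow> complex" where
  "pauli1 (False, False) r c = (if r = c then 1 else 0)"
| "pauli1 (False, True) r c = (if r \<noteq> c then 1 else 0)"
| "pauli1 (True, True) r c = (if r = 0 \<and> c = 1 then - \<i> else if r = 1 \<and> c = 0 then \<i> else 0)"
| "pauli1 (True, False) r c = (if r = c then (if r = 0 then 1 else -1) else 0)"

text \<open>Elements of F_2^{2n}: lists of n pairs of bits.\<close>
definition pidx :: "nat \<Rightarrow> (bool \<times> bool) list set" where
  "pidx n = {a. length a = n}"

definition pauli :: "nat \<Rightarrow> (bool \<times> bool) list \<Rightarrow> cmat" where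
  "pauli n a = (\<lambda>r c. if r < 2 ^ n \<and> c < 2 ^ n
       then (\<Prod>i<n. pauli1 (a ! i) (bitv i r) (bitv i c)) else 0)"

definition padd :: "(bool \<times> bool) list \<Rightarrow> (bool \<times> bool) list \<Rightarrow> (bool \<times> bool) list" where
  "padd a b = map2 (\<lambda>(z, x) (z', x'). (z \<noteq> z', x \<noteq> x')) a b"

definition pcommute :: "nat \<Rightarrow> (bool \<times> bool) list \<Rightarrow> (bool \<times> bool) list \<Rightarrow> bool" where
  "pcommute n a b \<longleftrightarrow> mmul (2 ^ n) (pauli n a) (pauli n b) = mmul (2 ^ n) (pauli n b) (pauli n a)"

text \<open>(-1)^{beta(a,a')}: the sign with sigma_a sigma_a' = (-1)^beta sigma_{a+a'}.\<close>
definition beta_sign :: "nat \<Rightarrow> (bool \<times> bool) list \<Rightarrow> (bool \<times> bool) list \<Rightarrow> real" where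
  "beta_sign n a b = (if mmul (2 ^ n) (pauli n a) (pauli n b) = pauli n (padd a b) then 1 else -1)"

definition omega :: "nat \<Rightarrow> cmat \<Rightarrow> superop" where
  "omega D g A = mmul D (mmul D g A) (adj g)"

definition omega_adj :: "nat \<Rightarrow> cmat \<Rightarrow> superop" where
  "omega_adj D g A = mmul D (mmul D (adj g) A) g"

definition clifford :: "nat \<Rightarrow> cmat \<Rightarrow> bool" where
  "clifford n U \<longleftrightarrow> unitary (2 ^ n) U \<and>
     (\<forall>a\<in>pidx n. \<exists>b\<in>pidx n. \<exists>s\<in>{1, -1}. omega (2 ^ n) U (pauli n a) = smul s (pauli n b))"

definition zidx :: "nat \<Rightarrow> bool list set" where
  "zidx n = {z. length z = n}"

definition Zop :: "nat \<Rightarrow> bool list \<Rightarrow> cmat" where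
  "Zop n z = pauli n (map (\<lambda>b. (b, False)) z)"

text \<open>Xi_z(g) = sigma_b with g^dagger Z_z g = +- sigma_b; we record the index b.\<close>
definition Xi :: "nat \<Rightarrow> bool list \<Rightarrow> cmat \<Rightarrow> (bool \<times> bool) list" where
  "Xi n z g = (THE b. b \<in> pidx n \<and>
      (omega_adj (2 ^ n) g (Zop n z) = pauli n b \<or>
       omega_adj (2 ^ n) g (Zop n z) = smul (-1) (pauli n b)))"

definition s1 :: "nat \<Rightarrow> cmat set \<Rightarrow> (cmat \<Rightarrow> real) \<Rightarrow> (bool \<times> bool) list \<Rightarrow> real" where
  "s1 n G p a = (\<Sum>z\<in>zidx n. \<Sum>g\<in>{g\<in>G. Xi n z g = a}. p g)"

definition r2 :: "nat \<Rightarrow> cmat set \<Rightarrow> (cmat \<Rightarrow> real) \<Rightarrow> (bool \<times> bool) list \<Rightarrow> (bool \<times> bool) list \<Rightarrow> real" where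
  "r2 n G p a a' = (\<Sum>z\<in>zidx n. \<Sum>z'\<in>zidx n. \<Sum>g\<in>{g\<in>G. Xi n z g = a \<and> Xi n z' g = a'}. p g)"

definition s2 :: "nat \<Rightarrow> cmat set \<Rightarrow> (cmat \<Rightarrow> real) \<Rightarrow> (bool \<times> bool) list \<Rightarrow> (bool \<times> bool) list \<Rightarrow> real" where
  "s2 n G p a a' = beta_sign n a a' * r2 n G p a a'"

definition Lbar :: "nat \<Rightarrow> cmat set \<Rightarrow> (cmat \<Rightarrow> real) \<Rightarrow> (cmat \<Rightarrow> superop)
                     \<Rightarrow> (bool \<times> bool) list \<Rightarrow> (bool \<times> bool) list \<Rightarrow> superop" where
  "Lbar n G p \<Lambda> a a' = (if r2 n G p a a' = 0 \<or> \<not> pcommute n a a' then id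
     else (\<lambda>A i j. complex_of_real (1 / r2 n G p a a') *
       (\<Sum>z\<in>zidx n. \<Sum>z'\<in>zidx n. \<Sum>g\<in>{g\<in>G. Xi n z g = a \<and> Xi n z' g = a'}.
          complex_of_real (p g) * \<Lambda> g A i j)))"

definition Ex :: "nat \<Rightarrow> cmat" where
  "Ex x = (\<lambda>i j. if i = x \<and> j = x then 1 else 0)"

definition Mmap :: "nat \<Rightarrow> superop" where
  "Mmap D A = (\<lambda>i j. \<Sum>x<D. hs D (Ex x) A * Ex x i j)"

definition Sop :: "nat \<Rightarrow> cmat set \<Rightarrow> (cmat \<Rightarrow> real) \<Rightarrow> superop" where
  "Sop n G p A = (\<lambda>i j. \<Sum>g\<in>G. complex_of_real (p g) *
       omega_adj (2 ^ n) g (Mmap (2 ^ n) (omega (2 ^ n) g A)) i j)"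

definition Sinv :: "nat \<Rightarrow> cmat set \<Rightarrow> (cmat \<Rightarrow> real) \<Rightarrow> superop" where
  "Sinv n G p = inv_into (mats (2 ^ n)) (Sop n G p)"

definition ohat :: "nat \<Rightarrow> cmat set \<Rightarrow> (cmat \<Rightarrow> real) \<Rightarrow> cmat \<Rightarrow> cmat \<Rightarrow> nat \<Rightarrow> complex" where
  "ohat n G p Obs g x = hs (2 ^ n) Obs (Sinv n G p (omega_adj (2 ^ n) g (Ex x)))"

text \<open>Second moment E(o-hat^2): g ~ p, outcome x with probability
  <x| omega(g) Lambda(g) (rho) |x>.\<close>
definition second_moment :: "nat \<Rightarrow> cmat set \<Rightarrow> (cmat \<Rightarrow> real) \<Rightarrow> (cmat \<Rightarrow> superop)
                               \<Rightarrow> cmat \<Rightarrow> cmat \<Rightarrow> complex" where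
  "second_moment n G p \<Lambda> Obs \<rho> = (\<Sum>g\<in>G. complex_of_real (p g) *
      (\<Sum>x<2 ^ n. omega (2 ^ n) g (\<Lambda> g \<rho>) x x * (ohat n G p Obs g x)\<^sup>2))"

definition stab_norm :: "nat \<Rightarrow> cmat \<Rightarrow> real" where
  "stab_norm n Obs = (1 / 2 ^ n) * (\<Sum>a\<in>pidx n. cmod (hs (2 ^ n) (pauli n a) Obs))"

definition superop_diff :: "superop \<Rightarrow> superop \<Rightarrow> superop" where
  "superop_diff \<Phi> \<Psi> = (\<lambda>A i j. \<Phi> A i j - \<Psi> A i j)"

end

theory Submission
  imports Defs
begin


lemma mats_zero: "A \<in> mats D \<Longrightarrow> (D \<le> i \<or> D \<le> j) \<Longrightarrow> A i j = 0"
  by (auto simp: mats_def)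

lemma mats_eqI: "A \<in> mats D \<Longrightarrow> B \<in> mats D \<Longrightarrow> (\<And>i j. i < D \<Longrightarrow> j < D \<Longrightarrow> A i j = B i j) \<Longrightarrow> A = B"
  apply (rule ext, rule ext)
  subgoal for i j by (cases "i < D \<and> j < D") (auto simp: mats_def)
  done

lemma mmul_mats[simp]: "mmul D A B \<in> mats D"
  by (auto simp: mats_def mmul_def)

lemma idm_mats[simp]: "idm D \<in> mats D"
  by (auto simp: mats_def idm_def)

lemma adj_mats: "A \<in> mats D \<Longrightarrow> adj A \<in> mats D"
  by (auto simp: mats_def adj_def)

lemma adj_adj[simp]: "adj (adj A) = A"
  by (simp add: adj_def)

lemma mmul_assoc: "mmul D (mmul D A B) C = mmul D A (mmul D B C)"
  unfolding mmul_def
  apply (rule ext, rule ext)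
  subgoal for i j
  apply (cases "i < D"; cases "j < D"; simp add: sum_distrib_left sum_distrib_right mult.assoc)
  apply (rule sum.swap)
  done done

lemma if01_mult: "(if P then 1 else 0) * (x::complex) = (if P then x else 0)"
  by simp
lemma mult_if01: "(x::complex) * (if P then 1 else 0) = (if P then x else 0)"
  by simp

lemma mmul_idm_left: "A \<in> mats D \<Longrightarrow> mmul D (idm D) A = A"
  apply (rule ext, rule ext)
  apply (simp only: mmul_def idm_def if01_mult)
  apply (auto simp: mats_def sum.delta)
  done

lemma mmul_idm_right: "A \<in> mats D \<Longrightarrow> mmul D A (idm D) = A"
  apply (rule ext, rule ext)
  apply (simp only: mmul_def idm_def mult_if01)
  apply (auto simp: mats_def sum.delta' conj_commute)
  done

lemma adj_mmul: "adj (mmul D A B) = mmul D (adj B) (adj A)"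
  by (auto simp: adj_def mmul_def mult.commute intro!: ext)

lemma adj_idm[simp]: "adj (idm D) = idm D"
  by (auto simp: adj_def idm_def intro!: ext)

lemma tr_cyclic: "tr D (mmul D A B) = tr D (mmul D B A)"
  unfolding tr_def mmul_def by (simp, subst sum.swap, simp add: mult.commute)

lemma hs_conj: "hs D A B = cnj (hs D B A)"
  unfolding hs_def tr_def mmul_def adj_def
  by (simp add: mult.commute)

lemma hs_adj_tr: "hs D (adj W) X = tr D (mmul D W X)"
  by (simp add: hs_def)

lemma unitary_adj: "unitary D U \<Longrightarrow> unitary D (adj U)"
  by (auto simp: unitary_def adj_mats)

lemma unitary_mmul: "unitary D U \<Longrightarrow> unitary D V \<Longrightarrow> unitary D (mmul D U V)"
  unfolding unitary_def
  by (simp add: adj_mmul mmul_assoc, metis (no_types) adj_mats mmul_assoc mmul_idm_left)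

lemma omega_adj_omega: "unitary D g \<Longrightarrow> A \<in> mats D \<Longrightarrow> omega_adj D g (omega D g A) = A"
  unfolding omega_adj_def omega_def unitary_def
  by (metis mmul_assoc mmul_idm_left mmul_idm_right)

lemma omega_omega_adj: "unitary D g \<Longrightarrow> A \<in> mats D \<Longrightarrow> omega D g (omega_adj D g A) = A"
  unfolding omega_adj_def omega_def unitary_def
  by (metis mmul_assoc mmul_idm_left mmul_idm_right)

lemma smul_mats: "A \<in> mats D \<Longrightarrow> smul c A \<in> mats D"
  by (auto simp: mats_def smul_def)

lemma mmul_smul_left: "mmul D (smul c A) B = smul c (mmul D A B)"
  by (auto simp: mmul_def smul_def sum_distrib_left mult.assoc intro!: ext)

lemma mmul_smul_right: "mmul D A (smul c B) = smul c (mmul D A B)"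
  by (auto simp: mmul_def smul_def sum_distrib_left mult.assoc mult.left_commute intro!: ext)

lemma smul_smul: "smul c (smul c' A) = smul (c * c') A"
  by (auto simp: smul_def intro!: ext)

lemma smul_one[simp]: "smul 1 A = A"
  by (auto simp: smul_def intro!: ext)

lemma omega_adj_smul: "omega_adj D g (smul c A) = smul c (omega_adj D g A)"
  by (simp add: omega_adj_def mmul_smul_left mmul_smul_right)

lemma omega_smul: "omega D g (smul c A) = smul c (omega D g A)"
  by (simp add: omega_def mmul_smul_left mmul_smul_right)

definition lc :: "'k set \<Rightarrow> ('k \<Rightarrow> complex) \<Rightarrow> ('k \<Rightarrow> cmat) \<Rightarrow> cmat" where
  "lc S c A = (\<lambda>i j. \<Sum>k\<in>S. c k * A k i j)"

lemma lc_mats: "(\<And>k. k \<in> S \<Longrightarrow> A k \<in> mats D) \<Longrightarrow> lc S c A \<in> mats D"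
  by (auto simp: mats_def lc_def)

lemma mmul_lc_left: "mmul D (lc S c A) B = lc S c (\<lambda>k. mmul D (A k) B)"
  unfolding mmul_def lc_def
  apply (rule ext, rule ext)
  subgoal for i j
  apply (cases "i < D"; cases "j < D"; simp add: sum_distrib_left sum_distrib_right mult.assoc)
  apply (rule sum.swap)
  done done

lemma mmul_lc_right: "mmul D B (lc S c A) = lc S c (\<lambda>k. mmul D B (A k))"
  unfolding mmul_def lc_def
  apply (rule ext, rule ext)
  subgoal for i j
  apply (cases "i < D"; cases "j < D"; simp add: sum_distrib_left sum_distrib_right mult.assoc mult.left_commute)
  apply (rule sum.swap)
  done done

lemma omega_adj_lc: "omega_adj D g (lc S c A) = lc S c (\<lambda>k. omega_adj D g (A k))"
  by (simp add: omega_adj_def mmul_lc_left mmul_lc_right)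

lemma omega_lc: "omega D g (lc S c A) = lc S c (\<lambda>k. omega D g (A k))"
  by (simp add: omega_def mmul_lc_left mmul_lc_right)

lemma tr_lc: "tr D (lc S c A) = (\<Sum>k\<in>S. c k * tr D (A k))"
  by (simp add: tr_def lc_def sum_distrib_left, rule sum.swap)

lemma hs_lc: "hs D B (lc S c A) = (\<Sum>k\<in>S. c k * hs D B (A k))"
  by (simp add: hs_def mmul_lc_right tr_lc)

lemma tr_smul0: "tr D (smul c A) = c * tr D A"
  by (simp add: tr_def smul_def sum_distrib_left)

lemma hs_smul: "hs D B (smul c A) = c * hs D B A"
  by (simp only: hs_def mmul_smul_right tr_smul0)

lemma tr_smul: "tr D (smul c A) = c * tr D A"
  by (simp add: tr_def smul_def sum_distrib_left)


lemma Mmap_lc: "Mmap D (lc S c A) = lc S c (\<lambda>k. Mmap D (A k))"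
  apply (simp only: Mmap_def hs_lc)
  apply (unfold lc_def)
  apply (simp add: sum_distrib_left sum_distrib_right mult.assoc)
  apply (rule ext, rule ext, rule sum.swap)
  done

lemma Mmap_smul: "Mmap D (smul c A) = smul c (Mmap D A)"
  apply (simp only: Mmap_def hs_smul)
  apply (simp add: smul_def sum_distrib_left mult.assoc)
  done

lemma Sop_lc: "Sop n G p (lc S c A) = lc S c (\<lambda>k. Sop n G p (A k))"
  apply (simp only: Sop_def omega_lc Mmap_lc omega_adj_lc)
  apply (unfold lc_def)
  apply (simp add: sum_distrib_left mult.left_commute)
  apply (rule ext, rule ext, rule sum.swap)
  done

lemma Sop_smul: "Sop n G p (smul c A) = smul c (Sop n G p A)"
  apply (simp only: Sop_def omega_smul Mmap_smul omega_adj_smul)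
  apply (simp add: smul_def sum_distrib_left mult.left_commute)
  done


lemma sum_lessThan_double: "(\<Sum>r<2*m. f r) = (\<Sum>r<m. f (2*r) + f (2*r+1::nat))"
  by (induction m) (simp_all add: sum.distrib add_ac)

lemma lessThan2: "{..<2::nat} = {0, 1}" by auto

definition kron :: "nat \<Rightarrow> cmat \<Rightarrow> cmat \<Rightarrow> cmat" where
  "kron D P A = (\<lambda>r c. if r < 2*D \<and> c < 2*D then P (r mod 2) (c mod 2) * A (r div 2) (c div 2) else 0)"

lemma kron_mats: "kron D P A \<in> mats (2*D)"
  by (auto simp: kron_def mats_def)

lemma sum_2D: "(\<Sum>k<2*D. f (k mod 2) (k div 2)) = (\<Sum>k<D. \<Sum>t<2::nat. f t (k::nat))"
  by (simp add: sum_lessThan_double lessThan2 add.commute)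

lemma mmul_kron: "mmul (2*D) (kron D P A) (kron D Q B) = kron D (mmul 2 P Q) (mmul D A B)"
proof (rule ext, rule ext)
  fix r c
  show "mmul (2*D) (kron D P A) (kron D Q B) r c = kron D (mmul 2 P Q) (mmul D A B) r c"
  proof (cases "r < 2*D \<and> c < 2*D")
    case True
    then have rd: "r div 2 < D" "c div 2 < D" by auto
    have "mmul (2*D) (kron D P A) (kron D Q B) r c =
       (\<Sum>k<2*D. (\<lambda>t k'. P (r mod 2) t * A (r div 2) k' * (Q t (c mod 2) * B k' (c div 2))) (k mod 2) (k div 2))"
      using True by (auto simp: mmul_def kron_def intro!: sum.cong)
    also have "\<dots> = (\<Sum>k<D. \<Sum>t<2. P (r mod 2) t * A (r div 2) k * (Q t (c mod 2) * B k (c div 2)))"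
      by (rule sum_2D)
    also have "\<dots> = (\<Sum>t<2. P (r mod 2) t * Q t (c mod 2)) * (\<Sum>k<D. A (r div 2) k * B k (c div 2))"
      by (simp add: sum_distrib_left sum_distrib_right mult_ac sum.swap[of _ "{..<D}"])
    also have "\<dots> = kron D (mmul 2 P Q) (mmul D A B) r c"
      using True rd by (simp add: kron_def mmul_def)
    finally show ?thesis .
  qed (auto simp: mmul_def kron_def)
qed

lemma adj_kron: "adj (kron D P A) = kron D (adj P) (adj A)"
  by (auto simp: adj_def kron_def intro!: ext)

lemma tr_kron: "tr (2*D) (kron D P A) = tr 2 P * tr D A"
proof -
  have "tr (2*D) (kron D P A) = (\<Sum>k<2*D. (\<lambda>t k'. P t t * A k' k') (k mod 2) (k div 2))"
    by (auto simp: tr_def kron_def intro!: sum.cong)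
  also have "\<dots> = (\<Sum>k<D. \<Sum>t<2. P t t * A k k)" by (rule sum_2D)
  also have "\<dots> = tr 2 P * tr D A"
    by (simp add: tr_def sum_distrib_left sum_distrib_right mult_ac sum.swap[of _ "{..<D}"])
  finally show ?thesis .
qed

lemma hs_kron: "hs (2*D) (kron D P A) (kron D Q B) = hs 2 P Q * hs D A B"
  by (simp add: hs_def adj_kron mmul_kron tr_kron)

lemma bitv_0: "bitv 0 r = r mod 2"
  by (simp add: bitv_def)

lemma bitv_Suc: "bitv (Suc i) r = bitv i (r div 2)"
  by (simp add: bitv_def div_mult2_eq)

definition P1 :: "bool \<times> bool \<Rightarrow> cmat" where
  "P1 q = (\<lambda>r c. if r < 2 \<and> c < 2 then pauli1 q r c else 0)"

lemma pauli_0: "pauli 0 a = idm 1"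
  by (auto simp: pauli_def idm_def intro!: ext)

lemma pauli_Cons: "pauli (Suc n) (q # a) = kron (2^n) (P1 q) (pauli n a)"
proof (rule ext, rule ext)
  fix r c
  have e: "(r < 2 ^ Suc n) = (r div 2 < (2::nat)^n)" "(c < 2 ^ Suc n) = (c div 2 < (2::nat)^n)" by auto
  have "(\<Prod>i<Suc n. pauli1 ((q # a) ! i) (bitv i r) (bitv i c)) =
        pauli1 q (r mod 2) (c mod 2) * (\<Prod>i<n. pauli1 (a ! i) (bitv i (r div 2)) (bitv i (c div 2)))"
    unfolding prod.lessThan_Suc_shift by (simp add: bitv_0 bitv_Suc)
  then show "pauli (Suc n) (q # a) r c = kron (2^n) (P1 q) (pauli n a) r c"
    unfolding pauli_def kron_def P1_def using e by auto
qed

lemma pidx_Suc: "pidx (Suc n) = (\<lambda>(q, a). q # a) ` (UNIV \<times> pidx n)"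
  by (auto simp: pidx_def image_iff length_Suc_conv)

lemma zidx_Suc: "zidx (Suc n) = (\<lambda>(q, a). q # a) ` (UNIV \<times> zidx n)"
  by (auto simp: zidx_def image_iff length_Suc_conv)

lemma finite_pidx: "finite (pidx n)"
proof -
  have "pidx n = {xs. set xs \<subseteq> UNIV \<and> length xs = n}" by (auto simp: pidx_def)
  then show ?thesis using finite_lists_length_eq[of "UNIV :: (bool \<times> bool) set" n] by simp
qed

lemma finite_zidx: "finite (zidx n)"
proof -
  have "zidx n = {xs. set xs \<subseteq> UNIV \<and> length xs = n}" by (auto simp: zidx_def)
  then show ?thesis using finite_lists_length_eq[of "UNIV :: bool set" n] by simp
qed

lemma sum_zidx_Suc: "(\<Sum>z\<in>zidx (Suc n). f z) = (\<Sum>b\<in>UNIV. \<Sum>z\<in>zidx n. f (b # z))"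
proof -
  have "inj_on (\<lambda>(q, a). q # a) (UNIV \<times> zidx n)" by (auto simp: inj_on_def)
  then have "(\<Sum>z\<in>zidx (Suc n). f z) = (\<Sum>x\<in>UNIV \<times> zidx n. f (case x of (q, a) \<Rightarrow> q # a))"
    unfolding zidx_Suc by (simp add: sum.reindex)
  also have "\<dots> = (\<Sum>(b, z)\<in>UNIV \<times> zidx n. f (b # z))"
    by (rule sum.cong) auto
  also have "\<dots> = (\<Sum>b\<in>UNIV. \<Sum>z\<in>zidx n. f (b # z))"
    by (rule sum.cartesian_product[symmetric])
  finally show ?thesis .
qed

lemma P1_cases: "q = (False, False) \<or> q = (False, True) \<or> q = (True, True) \<or> q = (True, False)"
  by (cases q) auto


lemma P1_sq: "mmul 2 (P1 q) (P1 q) = idm 2"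
  apply (rule ext, rule ext)
  subgoal for r c
    using P1_cases[of q]
    by (auto simp: mmul_def P1_def idm_def lessThan2 less_2_cases_iff)
  done

lemma P1_adj: "adj (P1 q) = P1 q"
  apply (rule ext, rule ext)
  subgoal for r c
    using P1_cases[of q]
    by (auto simp: adj_def P1_def less_2_cases_iff)
  done

lemma P1_hs: "hs 2 (P1 q) (P1 q') = (if q = q' then 2 else 0)"
  using P1_cases[of q] P1_cases[of q']
  by (auto simp: hs_def tr_def mmul_def adj_def P1_def lessThan2)

lemma pauli_mats: "pauli n a \<in> mats (2^n)"
  by (auto simp: pauli_def mats_def)

lemma pauli_adj: "length a = n \<Longrightarrow> adj (pauli n a) = pauli n a"
proof (induction n arbitrary: a)
  case 0 then show ?case by (simp add: pauli_0)
next
  case (Suc n)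
  then obtain q a' where "a = q # a'" "length a' = n" by (cases a) auto
  with Suc show ?case by (simp add: pauli_Cons adj_kron P1_adj)
qed

lemma kron_idm: "kron D (idm 2) (idm D) = idm (2*D)"
  apply (rule ext, rule ext)
  subgoal for r c
    apply (auto simp: kron_def idm_def)
    apply (metis div_mult_mod_eq)
    done
  done

lemma pauli_sq: "length a = n \<Longrightarrow> mmul (2^n) (pauli n a) (pauli n a) = idm (2^n)"
proof (induction n arbitrary: a)
  case 0 then show ?case by (auto simp: pauli_0 mmul_def idm_def intro!: ext)
next
  case (Suc n)
  then obtain q a' where "a = q # a'" "length a' = n" by (cases a) auto
  with Suc show ?case by (simp add: pauli_Cons mmul_kron P1_sq kron_idm)
qed

lemma pauli_hs: "length a = n \<Longrightarrow> length b = n \<Longrightarrow> hs (2^n) (pauli n a) (pauli n b) = (if a = b then 2^n else 0)"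
proof (induction n arbitrary: a b)
  case 0 then show ?case by (auto simp: pauli_0 hs_def tr_def mmul_def idm_def adj_def)
next
  case (Suc n)
  then obtain q a' where "a = q # a'" "length a' = n" by (cases a) auto
  moreover from Suc obtain q' b' where "b = q' # b'" "length b' = n" by (cases b) auto
  ultimately show ?case using Suc by (simp add: pauli_Cons hs_kron P1_hs)
qed

lemma pauli_unitary: "length a = n \<Longrightarrow> unitary (2^n) (pauli n a)"
  by (simp add: unitary_def pauli_mats pauli_adj pauli_sq)

lemma pauli_inj_sign:
  assumes "a \<in> pidx n" "b \<in> pidx n" "pauli n a = smul s (pauli n b)" "s \<in> {1, -1}"
  shows "a = b"
proof (rule ccontr)
  assume "a \<noteq> b"
  have "hs (2^n) (pauli n a) (pauli n a) = hs (2^n) (pauli n a) (smul s (pauli n b))"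
    using assms(3) by (rule arg_cong[where f="hs (2^n) (pauli n a)"])
  then have "hs (2^n) (pauli n a) (pauli n a) = s * hs (2^n) (pauli n a) (pauli n b)"
    by (simp only: hs_smul)
  moreover have "hs (2^n) (pauli n a) (pauli n a) = 2^n" "hs (2^n) (pauli n a) (pauli n b) = 0"
    using assms(1,2) \<open>a \<noteq> b\<close> by (simp_all add: pauli_hs pidx_def)
  ultimately show False by simp
qed


definition zmap :: "bool list \<Rightarrow> (bool \<times> bool) list" where
  "zmap z = map (\<lambda>b. (b, False)) z"

lemma Zop_zmap: "Zop n z = pauli n (zmap z)"
  by (simp add: Zop_def zmap_def)

lemma zmap_pidx: "z \<in> zidx n \<Longrightarrow> zmap z \<in> pidx n"
  by (simp add: zmap_def zidx_def pidx_def)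

lemma zmap_inj: "zmap z = zmap z' \<Longrightarrow> z = z'"
  unfolding zmap_def by (metis (no_types, lifting) fst_conv list.map_comp map_idI o_apply list.map_comp[symmetric] map_fst_zip)

definition isdiag :: "cmat \<Rightarrow> bool" where
  "isdiag A \<longleftrightarrow> (\<forall>r c. r \<noteq> c \<longrightarrow> A r c = 0)"

lemma isdiag_kron: "isdiag P \<Longrightarrow> isdiag A \<Longrightarrow> isdiag (kron D P A)"
  unfolding isdiag_def kron_def by (metis div_mult_mod_eq mult_zero_left mult_zero_right)

lemma Zop_Cons: "Zop (Suc n) (b # z) = kron (2^n) (P1 (b, False)) (Zop n z)"
  by (simp add: Zop_def pauli_Cons)

lemma Zop_0: "Zop 0 z = idm 1"
  by (simp add: Zop_def pauli_0)

lemma Zop_diag: "length z = n \<Longrightarrow> isdiag (Zop n z)"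
proof (induction n arbitrary: z)
  case 0 then show ?case by (simp add: Zop_0 isdiag_def idm_def)
next
  case (Suc n)
  then obtain b z' where "z = b # z'" "length z' = n" by (cases z) auto
  moreover have "isdiag (P1 (b, False))" by (cases b) (auto simp: isdiag_def P1_def)
  ultimately show ?case using Suc by (simp add: Zop_Cons isdiag_kron)
qed

lemma Zop_mats: "Zop n z \<in> mats (2^n)"
  by (simp add: Zop_def pauli_mats)

lemma zidx_0: "zidx 0 = {[]}"
  by (auto simp: zidx_def)

lemma P1_bit: "t < 2 \<Longrightarrow> u < 2 \<Longrightarrow> v < 2 \<Longrightarrow>
   (\<Sum>b\<in>(UNIV::bool set). P1 (b, False) t t * P1 (b, False) u v) = (if t = u \<and> t = v then 2 else 0)"
  by (auto simp: P1_def less_2_cases_iff UNIV_bool)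

lemma Ex_expand: "x < 2^n \<Longrightarrow> (\<Sum>z\<in>zidx n. Zop n z x x * Zop n z r c) = 2^n * Ex x r c"
proof (induction n arbitrary: x r c)
  case 0 then show ?case by (auto simp: zidx_0 Zop_0 idm_def Ex_def)
next
  case (Suc n)
  let ?D = "(2::nat)^n"
  show ?case
  proof (cases "r < 2 * ?D \<and> c < 2 * ?D")
    case True
    have x2: "x < 2 * ?D" using Suc.prems by simp
    have "(\<Sum>z\<in>zidx (Suc n). Zop (Suc n) z x x * Zop (Suc n) z r c) =
       (\<Sum>b\<in>UNIV. \<Sum>z\<in>zidx n. (P1 (b, False) (x mod 2) (x mod 2) * P1 (b, False) (r mod 2) (c mod 2)) *
            (Zop n z (x div 2) (x div 2) * Zop n z (r div 2) (c div 2)))"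
      using True x2 by (simp add: sum_zidx_Suc Zop_Cons kron_def mult_ac)
    also have "\<dots> = (\<Sum>b\<in>UNIV. P1 (b, False) (x mod 2) (x mod 2) * P1 (b, False) (r mod 2) (c mod 2)) *
            (\<Sum>z\<in>zidx n. Zop n z (x div 2) (x div 2) * Zop n z (r div 2) (c div 2))"
      by (rule sum_product[symmetric])
    also have "\<dots> = (if x mod 2 = r mod 2 \<and> x mod 2 = c mod 2 then 2 else 0) * (?D * Ex (x div 2) (r div 2) (c div 2))"
      using Suc.IH[of "x div 2"] x2 by (simp add: P1_bit)
    also have "\<dots> = 2 ^ Suc n * Ex x r c"
      by (auto simp: Ex_def) (metis div_mult_mod_eq)+
    finally show ?thesis .
  next
    case False
    have "Ex x r c = 0" using False Suc.prems by (auto simp: Ex_def)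
    moreover have "\<And>z. Zop (Suc n) z r c = 0"
      using False Zop_mats[of "Suc n"] by (auto simp: mats_def)
    ultimately show ?thesis by simp
  qed
qed

lemma hs_Ex: assumes "x < D" shows "hs D (Ex x) A = A x x"
proof -
  have "hs D (Ex x) A = (\<Sum>i<D. \<Sum>k<D. if k = x \<and> i = x then A k i else 0)"
    by (auto simp: hs_def tr_def mmul_def adj_def Ex_def intro!: sum.cong)
  also have "\<dots> = (\<Sum>i<D. if i = x then (\<Sum>k<D. if k = x then A k i else 0) else 0)"
    by (rule sum.cong) auto
  also have "\<dots> = A x x" using assms by simp
  finally show ?thesis .
qed

lemma Mmap_eq: "Mmap D A = (\<lambda>i j. if i = j \<and> i < D then A i i else 0)"
proof (rule ext, rule ext)
  fix i j
  have "Mmap D A i j = (\<Sum>x<D. A x x * Ex x i j)"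
    unfolding Mmap_def by (rule sum.cong) (simp_all add: hs_Ex)
  also have "\<dots> = (\<Sum>x<D. if i = x \<and> j = x then A x x else 0)"
    by (simp add: Ex_def mult_if01)
  also have "\<dots> = (if i = j \<and> i < D then A i i else 0)"
    by (cases "i = j") (auto intro!: sum.neutral)
  finally show "Mmap D A i j = (if i = j \<and> i < D then A i i else 0)" .
qed

lemma Mmap_diag: "A \<in> mats D \<Longrightarrow> isdiag A \<Longrightarrow> Mmap D A = A"
  by (auto simp: Mmap_eq isdiag_def mats_def intro!: ext)

lemma pauli_diag_zero: "length c = n \<Longrightarrow> i < n \<Longrightarrow> snd (c ! i) \<Longrightarrow> pauli n c r r = 0"
proof (induction n arbitrary: c i r)
  case 0 then show ?case by simp
next
  case (Suc n)
  then obtain q c' where c: "c = q # c'" "length c' = n" by (cases c) auto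
  show ?case
  proof (cases i)
    case 0
    then have "snd q" using Suc.prems c by simp
    then obtain a where "q = (a, True)" by (cases q) auto
    then have "P1 q (r mod 2) (r mod 2) = 0" by (cases a) (auto simp: P1_def)
    then show ?thesis by (simp add: c pauli_Cons kron_def)
  next
    case (Suc i')
    then have "pauli n c' (r div 2) (r div 2) = 0" using Suc.IH[of c' i'] Suc.prems c by simp
    then show ?thesis by (simp add: c pauli_Cons kron_def)
  qed
qed

lemma pidx_split: "c \<in> pidx n \<Longrightarrow> (\<exists>i<n. snd (c ! i)) \<or> c = zmap (map fst c)"
  unfolding pidx_def zmap_def
  by (auto intro!: nth_equalityI) (metis prod.collapse)

lemma Mmap_pauli_zero: "c \<in> pidx n \<Longrightarrow> \<exists>i<n. snd (c ! i) \<Longrightarrow> Mmap (2^n) (pauli n c) = (\<lambda>i j. 0)"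
  unfolding Mmap_eq using pauli_diag_zero by (auto simp: pidx_def intro!: ext)

lemma Mmap_Zop: "length z = n \<Longrightarrow> Mmap (2^n) (pauli n (zmap z)) = pauli n (zmap z)"
  using Zop_diag[of z n] Zop_mats[of n z] by (simp add: Zop_zmap Mmap_diag)

lemma sign_sq: "s \<in> {1, -1::complex} \<Longrightarrow> s * s = 1"
  by auto

lemma sign_mult: "s \<in> {1, -1::complex} \<Longrightarrow> s' \<in> {1, -1} \<Longrightarrow> s * s' \<in> {1, -1}"
  by auto

lemma clifford_unitary: "clifford n g \<Longrightarrow> unitary (2^n) g"
  by (simp add: clifford_def)

lemma smul_inv_sign: "s \<in> {1, -1::complex} \<Longrightarrow> A = smul s B \<Longrightarrow> B = smul s A"
  by (auto simp: smul_def)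

lemma clifford_adj_exists:
  assumes cl: "clifford n g" and b: "b \<in> pidx n"
  shows "\<exists>a\<in>pidx n. \<exists>s\<in>{1, -1}. omega_adj (2^n) g (pauli n b) = smul s (pauli n a)"
proof -
  let ?D = "(2::nat)^n"
  have U: "unitary ?D g" using cl by (simp add: clifford_def)
  have ex: "\<forall>a\<in>pidx n. \<exists>b\<in>pidx n. \<exists>s\<in>{1, -1}. omega ?D g (pauli n a) = smul s (pauli n b)"
    using cl by (simp add: clifford_def)
  define f where "f a = (SOME b. b \<in> pidx n \<and> (\<exists>s\<in>{1, -1}. omega ?D g (pauli n a) = smul s (pauli n b)))" for a
  have f: "f a \<in> pidx n \<and> (\<exists>s\<in>{1, -1}. omega ?D g (pauli n a) = smul s (pauli n (f a)))" if a: "a \<in> pidx n" for a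
  proof -
    have "\<exists>b. b \<in> pidx n \<and> (\<exists>s\<in>{1, -1}. omega ?D g (pauli n a) = smul s (pauli n b))" using ex a by blast
    then show ?thesis unfolding f_def by (rule someI_ex)
  qed
  have bk: "pauli n a = smul s (omega_adj ?D g (pauli n (f a)))"
    if "a \<in> pidx n" "s \<in> {1, -1}" "omega ?D g (pauli n a) = smul s (pauli n (f a))" for a s
  proof -
    have "pauli n a = omega_adj ?D g (omega ?D g (pauli n a))"
      using U by (simp add: omega_adj_omega pauli_mats)
    also have "\<dots> = smul s (omega_adj ?D g (pauli n (f a)))" using that by (simp add: omega_adj_smul)
    finally show ?thesis .
  qed
  have inj: "inj_on f (pidx n)"
  proof (rule inj_onI)
    fix a a' assume a: "a \<in> pidx n" and a': "a' \<in> pidx n" and eq: "f a = f a'"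
    obtain s where s: "s \<in> {1, -1}" "omega ?D g (pauli n a) = smul s (pauli n (f a))" using f[OF a] by blast
    obtain s' where s': "s' \<in> {1, -1}" "omega ?D g (pauli n a') = smul s' (pauli n (f a'))" using f[OF a'] by blast
    have 1: "pauli n a = smul s (omega_adj ?D g (pauli n (f a)))" using bk[OF a s(1) s(2)] .
    have 2: "pauli n a' = smul s' (omega_adj ?D g (pauli n (f a)))" using bk[OF a' s'(1) s'(2)] eq by simp
    have "omega_adj ?D g (pauli n (f a)) = smul s' (pauli n a')" using smul_inv_sign[OF s'(1) 2] .
    then have "pauli n a = smul (s * s') (pauli n a')" using 1 by (simp add: smul_smul)
    then show "a = a'" using pauli_inj_sign[OF a a'] sign_mult[OF s(1) s'(1)] by blast
  qed
  have "f ` pidx n = pidx n"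
    by (rule endo_inj_surj[OF finite_pidx _ inj]) (use f in blast)
  then obtain a where a: "a \<in> pidx n" "f a = b" using b by (metis imageE)
  obtain s where s: "s \<in> {1, -1}" "omega ?D g (pauli n a) = smul s (pauli n (f a))" using f[OF a(1)] by blast
  have "omega_adj ?D g (pauli n b) = smul s (pauli n a)"
    using smul_inv_sign[OF s(1) bk[OF a(1) s]] a(2) by simp
  then show ?thesis using a(1) s(1) by blast
qed

lemma Xi_prop:
  assumes cl: "clifford n g" and z: "z \<in> zidx n"
  shows "Xi n z g \<in> pidx n \<and> (\<exists>s\<in>{1, -1}. omega_adj (2^n) g (Zop n z) = smul s (pauli n (Xi n z g)))"
proof -
  let ?Y = "omega_adj (2^n) g (Zop n z)"
  obtain a s where a: "a \<in> pidx n" "s \<in> {1, -1}" "omega_adj (2^n) g (pauli n (zmap z)) = smul s (pauli n a)"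
    using clifford_adj_exists[OF cl zmap_pidx[OF z]] by blast
  note a(3)[folded Zop_zmap]
  note a3 = a(3)[folded Zop_zmap]
  have uniq: "b = a" if "b \<in> pidx n" "s' \<in> {1, -1}" "?Y = smul s' (pauli n b)" for b s'
  proof -
    have "pauli n b = smul s' (smul s (pauli n a))" using smul_inv_sign[OF that(2) that(3)] a3 by simp
    then have "pauli n b = smul (s' * s) (pauli n a)" by (simp add: smul_smul)
    then show ?thesis using pauli_inj_sign[OF that(1) a(1)] sign_mult[OF that(2) a(2)] by blast
  qed
  have "\<exists>!b. b \<in> pidx n \<and> (?Y = pauli n b \<or> ?Y = smul (-1) (pauli n b))"
  proof (rule ex1I[of _ a])
    show "a \<in> pidx n \<and> (?Y = pauli n a \<or> ?Y = smul (-1) (pauli n a))"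
      using a(1,2) a3 by auto
  next
    fix b assume "b \<in> pidx n \<and> (?Y = pauli n b \<or> ?Y = smul (-1) (pauli n b))"
    then show "b = a" using uniq[of b 1] uniq[of b "-1"] by auto
  qed
  from theI'[OF this] have "Xi n z g \<in> pidx n \<and> (?Y = pauli n (Xi n z g) \<or> ?Y = smul (-1) (pauli n (Xi n z g)))"
    unfolding Xi_def by blast
  then show ?thesis by (metis insertCI smul_one)
qed

lemma Xi_inj:
  assumes cl: "clifford n g" and z: "z \<in> zidx n" and z': "z' \<in> zidx n" and eq: "Xi n z g = Xi n z' g"
  shows "z = z'"
proof -
  let ?D = "(2::nat)^n"
  have U: "unitary ?D g" using cl by (simp add: clifford_def)
  obtain s where s: "s \<in> {1, -1}" "omega_adj ?D g (Zop n z) = smul s (pauli n (Xi n z g))" using Xi_prop[OF cl z] by blast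
  obtain s' where s': "s' \<in> {1, -1}" "omega_adj ?D g (Zop n z') = smul s' (pauli n (Xi n z g))" using Xi_prop[OF cl z'] eq by metis
  have "Zop n z = omega ?D g (omega_adj ?D g (Zop n z))" using U by (simp add: omega_omega_adj Zop_mats)
  also have "\<dots> = smul s (omega ?D g (pauli n (Xi n z g)))" using s by (simp add: omega_smul)
  finally have 1: "Zop n z = smul s (omega ?D g (pauli n (Xi n z g)))" .
  have "Zop n z' = omega ?D g (omega_adj ?D g (Zop n z'))" using U by (simp add: omega_omega_adj Zop_mats)
  also have "\<dots> = smul s' (omega ?D g (pauli n (Xi n z g)))" using s' by (simp add: omega_smul)
  finally have 2: "Zop n z' = smul s' (omega ?D g (pauli n (Xi n z g)))" .
  have "omega ?D g (pauli n (Xi n z g)) = smul s' (Zop n z')" using smul_inv_sign[OF s'(1) 2] .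
  then have "pauli n (zmap z) = smul (s * s') (pauli n (zmap z'))" using 1 by (simp add: smul_smul Zop_zmap)
  then have "zmap z = zmap z'" using pauli_inj_sign[OF zmap_pidx[OF z] zmap_pidx[OF z']] sign_mult[OF s(1) s'(1)] by blast
  then show ?thesis by (rule zmap_inj)
qed


definition zero :: cmat where "zero = (\<lambda>i j. 0)"

lemma mmul_zero_right: "mmul D A zero = zero"
  unfolding mmul_def zero_def by (intro ext) simp
lemma mmul_zero_left: "mmul D zero A = zero"
  unfolding mmul_def zero_def by (intro ext) simp
lemma omega_adj_zero: "omega_adj D g zero = zero"
  by (simp add: omega_adj_def mmul_zero_right mmul_zero_left)

lemma smul_zero_left: "smul 0 A = zero"
  by (simp add: smul_def zero_def)

lemma smul_zero_right: "smul c zero = zero"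
  by (simp add: smul_def zero_def)

lemma Mmap_smul': "Mmap D (smul c A) = smul c (Mmap D A)"
  by (rule Mmap_smul)

lemma zmap_snd: "i < length z \<Longrightarrow> \<not> snd (zmap z ! i)"
  by (simp add: zmap_def)

lemma term_g:
  assumes cl: "clifford n g" and a: "a \<in> pidx n"
  shows "omega_adj (2^n) g (Mmap (2^n) (omega (2^n) g (pauli n a))) =
         (if \<exists>z\<in>zidx n. Xi n z g = a then pauli n a else zero)"
proof -
  let ?D = "(2::nat)^n"
  have U: "unitary ?D g" using cl by (simp add: clifford_def)
  obtain c t where c: "c \<in> pidx n" "t \<in> {1, -1}" "omega ?D g (pauli n a) = smul t (pauli n c)"
    using cl a unfolding clifford_def by blast
  have bk: "omega_adj ?D g (pauli n c) = smul t (pauli n a)"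
  proof -
    have "pauli n a = omega_adj ?D g (omega ?D g (pauli n a))" using U by (simp add: omega_adj_omega pauli_mats)
    also have "\<dots> = smul t (omega_adj ?D g (pauli n c))" using c(3) by (simp add: omega_adj_smul)
    finally show ?thesis by (rule smul_inv_sign[OF c(2)])
  qed
  have Xi_eq: "zmap z = c" if z: "z \<in> zidx n" "Xi n z g = a" for z
  proof -
    obtain s where s: "s \<in> {1, -1}" "omega_adj ?D g (Zop n z) = smul s (pauli n (Xi n z g))" using Xi_prop[OF cl z(1)] by blast
    note s(2)[unfolded z(2)]
    have "Zop n z = omega ?D g (omega_adj ?D g (Zop n z))" using U by (simp add: omega_omega_adj Zop_mats)
    also have "\<dots> = smul (s * t) (pauli n c)" using s(2)[unfolded z(2)] c(3) by (simp add: omega_smul smul_smul)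
    finally have "pauli n (zmap z) = smul (s * t) (pauli n c)" by (simp add: Zop_zmap)
    then show ?thesis using pauli_inj_sign[OF zmap_pidx[OF z(1)] c(1)] sign_mult[OF s(1) c(2)] by blast
  qed
  show ?thesis
  proof (cases "\<exists>i<n. snd (c ! i)")
    case True
    have "\<not> (\<exists>z\<in>zidx n. Xi n z g = a)"
    proof
      assume "\<exists>z\<in>zidx n. Xi n z g = a"
      then obtain z where "z \<in> zidx n" "Xi n z g = a" by blast
      then have "zmap z = c" "length z = n" using Xi_eq by (auto simp: zidx_def)
      then show False using True zmap_snd by blast
    qed
    moreover have "Mmap ?D (omega ?D g (pauli n a)) = smul t (Mmap ?D (pauli n c))"
      by (simp only: c(3) Mmap_smul)
    moreover have "smul t (Mmap ?D (pauli n c)) = zero"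
      using Mmap_pauli_zero[OF c(1) True] by (simp add: zero_def smul_def)
    ultimately show ?thesis by (simp add: omega_adj_zero)
  next
    case False
    then have cz: "zmap (map fst c) = c" using pidx_split[OF c(1)] by metis
    have z0: "map fst c \<in> zidx n" using c(1) by (simp add: pidx_def zidx_def)
    have "Mmap ?D (omega ?D g (pauli n a)) = omega ?D g (pauli n a)"
      using c(3) Mmap_Zop[of "map fst c" n] z0 unfolding cz by (simp add: Mmap_smul zidx_def)
    then have lhs: "omega_adj ?D g (Mmap ?D (omega ?D g (pauli n a))) = pauli n a"
      using U by (simp add: omega_adj_omega pauli_mats)
    obtain s where s: "s \<in> {1, -1}" "omega_adj ?D g (Zop n (map fst c)) = smul s (pauli n (Xi n (map fst c) g))"
      using Xi_prop[OF cl z0] by blast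
    have "smul t (pauli n a) = smul s (pauli n (Xi n (map fst c) g))"
      using s(2) bk by (simp add: Zop_zmap cz)
    then have "pauli n a = smul t (smul s (pauli n (Xi n (map fst c) g)))"
      using smul_inv_sign[OF c(2)] by metis
    then have "pauli n a = smul (t * s) (pauli n (Xi n (map fst c) g))"
      by (simp only: smul_smul)
    moreover have "Xi n (map fst c) g \<in> pidx n" using Xi_prop[OF cl z0] by blast
    ultimately have "a = Xi n (map fst c) g"
      using pauli_inj_sign[OF a _ _ sign_mult[OF c(2) s(1)]] by blast
    then show ?thesis using lhs z0 by auto
  qed
qed


lemma count_Xi:
  assumes cl: "clifford n g"
  shows "(\<Sum>z\<in>zidx n. if Xi n z g = a then 1 else 0) = (if \<exists>z\<in>zidx n. Xi n z g = a then 1 else (0::real))"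
proof (cases "\<exists>z\<in>zidx n. Xi n z g = a")
  case True
  then obtain z0 where z0: "z0 \<in> zidx n" "Xi n z0 g = a" by blast
  have "(\<Sum>z\<in>zidx n. if Xi n z g = a then 1 else 0) = (\<Sum>z\<in>zidx n. if z = z0 then 1 else (0::real))"
  proof (rule sum.cong)
    fix z assume z: "z \<in> zidx n"
    have "(Xi n z g = a) = (z = z0)" using Xi_inj[OF cl z z0(1)] z0(2) by auto
    then show "(if Xi n z g = a then 1 else 0) = (if z = z0 then 1 else (0::real))" by simp
  qed simp
  also have "\<dots> = 1" using z0(1) finite_zidx[of n] by simp
  finally show ?thesis using True by simp
qed simp

lemma s1_alt:
  assumes fin: "finite G" and cl: "\<forall>g\<in>G. clifford n g"
  shows "s1 n G p a = (\<Sum>g\<in>G. p g * (if \<exists>z\<in>zidx n. Xi n z g = a then 1 else 0))"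
proof -
  have "s1 n G p a = (\<Sum>z\<in>zidx n. \<Sum>g\<in>G. if Xi n z g = a then p g else 0)"
    unfolding s1_def using fin by (simp add: sum.inter_filter)
  also have "\<dots> = (\<Sum>g\<in>G. \<Sum>z\<in>zidx n. if Xi n z g = a then p g else 0)"
    by (rule sum.swap)
  also have "\<dots> = (\<Sum>g\<in>G. \<Sum>z\<in>zidx n. p g * (if Xi n z g = a then 1 else 0))"
    by (intro sum.cong) auto
  also have "\<dots> = (\<Sum>g\<in>G. p g * (\<Sum>z\<in>zidx n. if Xi n z g = a then 1 else 0))"
    by (simp add: sum_distrib_left)
  also have "\<dots> = (\<Sum>g\<in>G. p g * (if \<exists>z\<in>zidx n. Xi n z g = a then 1 else 0))"
    using cl count_Xi by (intro sum.cong) auto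
  finally show ?thesis .
qed

lemma Sop_pauli:
  assumes fin: "finite G" and cl: "\<forall>g\<in>G. clifford n g" and a: "a \<in> pidx n"
  shows "Sop n G p (pauli n a) = smul (complex_of_real (s1 n G p a)) (pauli n a)"
proof (rule ext, rule ext)
  fix i j
  have "Sop n G p (pauli n a) i j = (\<Sum>g\<in>G. complex_of_real (p g) * (if \<exists>z\<in>zidx n. Xi n z g = a then pauli n a i j else 0))"
    unfolding Sop_def
  proof (rule sum.cong)
    fix g assume g: "g \<in> G"
    have e: "omega_adj (2^n) g (Mmap (2^n) (omega (2^n) g (pauli n a))) = (if \<exists>z\<in>zidx n. Xi n z g = a then pauli n a else zero)"
      using term_g[OF _ a] g cl by blast
    show "complex_of_real (p g) * omega_adj (2^n) g (Mmap (2^n) (omega (2^n) g (pauli n a))) i j =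
          complex_of_real (p g) * (if \<exists>z\<in>zidx n. Xi n z g = a then pauli n a i j else 0)"
      unfolding e by (simp add: zero_def)
  qed simp
  also have "\<dots> = (\<Sum>g\<in>G. complex_of_real (p g * (if \<exists>z\<in>zidx n. Xi n z g = a then 1 else 0)) * pauli n a i j)"
    by (intro sum.cong) auto
  also have "\<dots> = complex_of_real (s1 n G p a) * pauli n a i j"
    unfolding s1_alt[OF fin cl] by (simp only: of_real_sum sum_distrib_right)
  finally show "Sop n G p (pauli n a) i j = smul (complex_of_real (s1 n G p a)) (pauli n a) i j"
    by (simp add: smul_def)
qed

lemma s1_nonneg: "\<forall>g\<in>G. p g \<ge> 0 \<Longrightarrow> s1 n G p a \<ge> 0"
  unfolding s1_def by (intro sum_nonneg) auto

lemma zero_mats: "zero \<in> mats D"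
  by (simp add: zero_def mats_def)

lemma pauli_ne_zero: "a \<in> pidx n \<Longrightarrow> pauli n a \<noteq> zero"
proof
  assume a: "a \<in> pidx n" and eq: "pauli n a = zero"
  have "hs (2^n) (pauli n a) (pauli n a) = 2^n" using a by (simp add: pauli_hs pidx_def)
  then have "hs (2^n) zero zero = 2^n" by (simp only: eq)
  moreover have "hs (2^n) zero zero = 0" unfolding hs_def mmul_zero_right by (simp add: tr_def zero_def)
  ultimately show False by simp
qed

lemma Sop_zero: "Sop n G p zero = zero"
  using Sop_smul[of n G p 0 zero] by (simp add: smul_zero_left)

lemma s1_pos:
  assumes fin: "finite G" and cl: "\<forall>g\<in>G. clifford n g" and pn: "\<forall>g\<in>G. p g \<ge> 0"
    and S: "bij_betw (Sop n G p) (mats (2 ^ n)) (mats (2 ^ n))" and a: "a \<in> pidx n"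
  shows "s1 n G p a > 0"
proof -
  have "s1 n G p a \<noteq> 0"
  proof
    assume "s1 n G p a = 0"
    then have "Sop n G p (pauli n a) = Sop n G p zero"
      using Sop_pauli[OF fin cl a] by (simp add: Sop_zero smul_zero_left)
    then have "pauli n a = zero"
      using S pauli_mats zero_mats unfolding bij_betw_def inj_on_def by blast
    then show False using pauli_ne_zero[OF a] by simp
  qed
  then show ?thesis using s1_nonneg[OF pn] by (simp add: order_less_le)
qed


definition ip :: "nat \<Rightarrow> (nat \<Rightarrow> complex) \<Rightarrow> (nat \<Rightarrow> complex) \<Rightarrow> complex" where
  "ip D u w = (\<Sum>i<D. cnj (u i) * w i)"

lemma vnorm_nonneg: "vnorm D v \<ge> 0"
  unfolding vnorm_def by (rule real_sqrt_ge_zero) (meson sum_nonneg zero_le_power2)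

lemma vnorm_sq: "(vnorm D v)\<^sup>2 = (\<Sum>i<D. (cmod (v i))\<^sup>2)"
proof -
  have "0 \<le> (\<Sum>i<D. (cmod (v i))\<^sup>2)" by (meson sum_nonneg zero_le_power2)
  then show ?thesis unfolding vnorm_def by (rule real_sqrt_pow2)
qed

lemma cmod_le_vnorm: "i < D \<Longrightarrow> cmod (v i) \<le> vnorm D v"
proof -
  assume i: "i < D"
  have "(cmod (v i))\<^sup>2 \<le> (\<Sum>j<D. (cmod (v j))\<^sup>2)"
    using i by (intro member_le_sum) auto
  then show ?thesis unfolding vnorm_def by (simp add: real_le_rsqrt)
qed

lemma vnorm_cong: "(\<And>i. i < D \<Longrightarrow> u i = v i) \<Longrightarrow> vnorm D u = vnorm D v"
  unfolding vnorm_def by (rule arg_cong[where f=sqrt], rule sum.cong) auto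

lemma sqrt_add_sq_le: "0 \<le> s \<Longrightarrow> 0 \<le> x \<Longrightarrow> sqrt (s + x\<^sup>2) \<le> sqrt s + x"
  by (rule real_le_lsqrt) (auto simp: power2_eq_square algebra_simps)

lemma vnorm_le_l1: "vnorm D v \<le> (\<Sum>i<D. cmod (v i))"
proof (induction D)
  case 0 then show ?case by (simp add: vnorm_def)
next
  case (Suc D)
  have "vnorm (Suc D) v = sqrt ((\<Sum>i<D. (cmod (v i))\<^sup>2) + (cmod (v D))\<^sup>2)"
    by (simp add: vnorm_def)
  also have "\<dots> \<le> sqrt (\<Sum>i<D. (cmod (v i))\<^sup>2) + cmod (v D)"
    by (rule sqrt_add_sq_le) (auto intro: sum_nonneg)
  also have "\<dots> \<le> (\<Sum>i<Suc D. cmod (v i))"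
    using Suc.IH by (simp add: vnorm_def)
  finally show ?case .
qed

lemma vnorm_scale: "vnorm D (\<lambda>i. c * v i) = cmod c * vnorm D v"
proof -
  have "vnorm D (\<lambda>i. c * v i) = sqrt ((cmod c)\<^sup>2 * (\<Sum>i<D. (cmod (v i))\<^sup>2))"
    by (simp add: vnorm_def norm_mult power_mult_distrib sum_distrib_left)
  also have "\<dots> = cmod c * vnorm D v" by (simp add: real_sqrt_mult vnorm_def)
  finally show ?thesis .
qed

lemma vnorm_zero_iff: "vnorm D v = 0 \<longleftrightarrow> (\<forall>i<D. v i = 0)"
proof -
  have "vnorm D v = 0 \<longleftrightarrow> (\<Sum>i<D. (cmod (v i))\<^sup>2) = 0" by (simp add: vnorm_def)
  also have "\<dots> \<longleftrightarrow> (\<forall>i\<in>{..<D}. (cmod (v i))\<^sup>2 = 0)" by (simp add: sum_nonneg_eq_0_iff)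
  also have "\<dots> \<longleftrightarrow> (\<forall>i<D. v i = 0)" by auto
  finally show ?thesis .
qed

lemma amgm: "0 < s \<Longrightarrow> x * y \<le> (x\<^sup>2 * s + y\<^sup>2 / s) / 2" for x y s :: real
proof -
  assume s: "0 < s"
  have "0 \<le> (x * s - y)\<^sup>2 / s" using s by simp
  then have "0 \<le> (x\<^sup>2 * s\<^sup>2 - 2 * x * y * s + y\<^sup>2) / s" by (simp add: power2_eq_square algebra_simps)
  also have "\<dots> = x\<^sup>2 * s - 2 * x * y + y\<^sup>2 / s" using s by (simp add: field_simps power2_eq_square)
  finally show ?thesis by simp
qed

lemma amgm2: "0 < s \<Longrightarrow> x * y \<le> x\<^sup>2 * (s / 2) + y\<^sup>2 * (1 / (2 * s))" for x y s :: real
  using amgm[of s x y] by (simp add: field_simps)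

lemma sum_prod_le_vnorm: "(\<Sum>i<D. cmod (u i) * cmod (w i)) \<le> vnorm D u * vnorm D w"
proof (cases "vnorm D u = 0 \<or> vnorm D w = 0")
  case True
  then have "\<forall>i<D. cmod (u i) * cmod (w i) = 0" using vnorm_zero_iff by auto
  then have "(\<Sum>i<D. cmod (u i) * cmod (w i)) = 0" by (intro sum.neutral) auto
  then show ?thesis using vnorm_nonneg[of D u] vnorm_nonneg[of D w] by simp
next
  case False
  let ?U = "vnorm D u" and ?W = "vnorm D w"
  have U: "?U > 0" and W: "?W > 0" using False vnorm_nonneg[of D u] vnorm_nonneg[of D w] by auto
  have "(\<Sum>i<D. cmod (u i) * cmod (w i)) \<le> (\<Sum>i<D. (cmod (u i))\<^sup>2 * ((?W / ?U) / 2) + (cmod (w i))\<^sup>2 * (1 / (2 * (?W / ?U))))"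
    using U W by (intro sum_mono amgm2) auto
  also have "\<dots> = (\<Sum>i<D. (cmod (u i))\<^sup>2) * ((?W / ?U) / 2) + (\<Sum>i<D. (cmod (w i))\<^sup>2) * (1 / (2 * (?W / ?U)))"
    by (simp only: sum.distrib sum_distrib_right)
  also have "\<dots> = ?U\<^sup>2 * ((?W / ?U) / 2) + ?W\<^sup>2 * (1 / (2 * (?W / ?U)))" by (simp only: vnorm_sq)
  also have "\<dots> = ?U * ?W" using U W by (simp add: field_simps power2_eq_square)
  finally show ?thesis .
qed

lemma ip_cs: "cmod (ip D u w) \<le> vnorm D u * vnorm D w"
proof -
  have "cmod (ip D u w) \<le> (\<Sum>i<D. cmod (cnj (u i) * w i))" unfolding ip_def by (rule norm_sum)
  also have "\<dots> = (\<Sum>i<D. cmod (u i) * cmod (w i))" by (simp add: norm_mult)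
  also have "\<dots> \<le> vnorm D u * vnorm D w" by (rule sum_prod_le_vnorm)
  finally show ?thesis .
qed

lemma ip_self: "ip D v v = complex_of_real ((vnorm D v)\<^sup>2)"
proof -
  have "ip D v v = (\<Sum>i<D. complex_of_real ((cmod (v i))\<^sup>2))"
    unfolding ip_def by (intro sum.cong refl) (metis complex_norm_square mult.commute)
  then show ?thesis by (simp add: vnorm_sq)
qed

lemma mvec_adj: "ip D (mvec D A u) w = ip D u (mvec D (adj A) w)"
proof -
  have L: "ip D (mvec D A u) w = (\<Sum>i<D. \<Sum>k<D. cnj (u k) * (cnj (A i k) * w i))"
    unfolding ip_def mvec_def by (auto simp: sum_distrib_right sum_distrib_left mult_ac intro!: sum.cong)
  have R: "ip D u (mvec D (adj A) w) = (\<Sum>k<D. \<Sum>i<D. cnj (u k) * (cnj (A i k) * w i))"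
    unfolding ip_def mvec_def adj_def by (auto simp: sum_distrib_left intro!: sum.cong)
  show ?thesis unfolding L R by (rule sum.swap)
qed

lemma mvec_mmul: "mvec D (mmul D A B) v = mvec D A (mvec D B v)"
proof (rule ext)
  fix i
  show "mvec D (mmul D A B) v i = mvec D A (mvec D B v) i"
  proof (cases "i < D")
    case True
    have L: "mvec D (mmul D A B) v i = (\<Sum>k<D. \<Sum>l<D. A i l * (B l k * v k))"
      using True unfolding mvec_def mmul_def by (auto simp: sum_distrib_right sum_distrib_left mult_ac intro!: sum.cong)
    have R: "mvec D A (mvec D B v) i = (\<Sum>l<D. \<Sum>k<D. A i l * (B l k * v k))"
      using True unfolding mvec_def by (auto simp: sum_distrib_left intro!: sum.cong)
    show ?thesis unfolding L R by (rule sum.swap)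
  qed (simp add: mvec_def)
qed

lemma mvec_idm: "i < D \<Longrightarrow> mvec D (idm D) v i = v i"
  by (simp add: mvec_def idm_def if01_mult sum.delta)

lemma ip_cong: "(\<And>i. i < D \<Longrightarrow> w i = w' i) \<Longrightarrow> ip D u w = ip D u w'"
  unfolding ip_def by (rule sum.cong) auto

lemma mvec_bound: "vnorm D (mvec D W v) \<le> (\<Sum>i<D. \<Sum>k<D. cmod (W i k)) * vnorm D v"
proof -
  have "vnorm D (mvec D W v) \<le> (\<Sum>i<D. cmod (mvec D W v i))" by (rule vnorm_le_l1)
  also have "\<dots> \<le> (\<Sum>i<D. \<Sum>k<D. cmod (W i k) * vnorm D v)"
  proof (rule sum_mono)
    fix i assume i: "i \<in> {..<D}"
    have "cmod (mvec D W v i) \<le> (\<Sum>k<D. cmod (W i k * v k))" using i by (simp add: mvec_def norm_sum)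
    also have "\<dots> \<le> (\<Sum>k<D. cmod (W i k) * vnorm D v)"
      by (intro sum_mono) (simp add: norm_mult cmod_le_vnorm mult_left_mono)
    finally show "cmod (mvec D W v i) \<le> (\<Sum>k<D. cmod (W i k) * vnorm D v)" .
  qed
  also have "\<dots> = (\<Sum>i<D. \<Sum>k<D. cmod (W i k)) * vnorm D v" by (simp add: sum_distrib_right)
  finally show ?thesis .
qed

lemma opnorm_bdd: "bdd_above {vnorm D (mvec D W v) | v. vnorm D v \<le> 1}"
proof (rule bdd_aboveI)
  fix x assume "x \<in> {vnorm D (mvec D W v) | v. vnorm D v \<le> 1}"
  then obtain v where v: "x = vnorm D (mvec D W v)" "vnorm D v \<le> 1" by blast
  have K: "0 \<le> (\<Sum>i<D. \<Sum>k<D. cmod (W i k))" by (intro sum_nonneg) auto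
  have "x \<le> (\<Sum>i<D. \<Sum>k<D. cmod (W i k)) * vnorm D v" using v mvec_bound by simp
  also have "\<dots> \<le> (\<Sum>i<D. \<Sum>k<D. cmod (W i k))" using v(2) K by (simp add: mult_left_le)
  finally show "x \<le> (\<Sum>i<D. \<Sum>k<D. cmod (W i k))" .
qed

lemma opnorm_upper: "vnorm D v \<le> 1 \<Longrightarrow> vnorm D (mvec D W v) \<le> opnorm D W"
  unfolding opnorm_def by (rule cSup_upper[OF _ opnorm_bdd]) blast

lemma opnorm_least: "(\<And>v. vnorm D v \<le> 1 \<Longrightarrow> vnorm D (mvec D W v) \<le> c) \<Longrightarrow> opnorm D W \<le> c"
  unfolding opnorm_def
proof (rule cSup_least)
  show "{vnorm D (mvec D W v) |v. vnorm D v \<le> 1} \<noteq> {}"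
  proof -
    have "vnorm D (\<lambda>i. 0) \<le> 1" by (simp add: vnorm_def)
    then show ?thesis by blast
  qed
qed auto

lemma opnorm_nonneg: "opnorm D W \<ge> 0"
proof -
  have "vnorm D (\<lambda>i. 0) \<le> 1" by (simp add: vnorm_def)
  then have "vnorm D (mvec D W (\<lambda>i. 0)) \<le> opnorm D W" by (rule opnorm_upper)
  then show ?thesis using vnorm_nonneg[of D "mvec D W (\<lambda>i. 0)"] by linarith
qed

lemma mvec_scale: "mvec D W (\<lambda>i. c * v i) = (\<lambda>i. c * mvec D W v i)"
  by (auto simp: mvec_def sum_distrib_left mult_ac intro!: ext)

lemma opnorm_mult: "vnorm D (mvec D W v) \<le> opnorm D W * vnorm D v"
proof (cases "vnorm D v = 0")
  case True
  then have "\<forall>i<D. mvec D W v i = 0" using vnorm_zero_iff[of D v] by (simp add: mvec_def)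
  then have "vnorm D (mvec D W v) = 0" using vnorm_zero_iff by blast
  then show ?thesis using True by simp
next
  case False
  let ?c = "complex_of_real (1 / vnorm D v)"
  have pos: "vnorm D v > 0" using False vnorm_nonneg[of D v] by simp
  have "vnorm D (\<lambda>i. ?c * v i) = cmod ?c * vnorm D v" by (rule vnorm_scale)
  also have "\<dots> = 1" using pos by (simp add: norm_divide)
  finally have "vnorm D (\<lambda>i. ?c * v i) = 1" .
  then have "vnorm D (mvec D W (\<lambda>i. ?c * v i)) \<le> opnorm D W" by (simp add: opnorm_upper)
  then have "cmod ?c * vnorm D (mvec D W v) \<le> opnorm D W"
    unfolding mvec_scale vnorm_scale .
  then have "(1 / vnorm D v) * vnorm D (mvec D W v) \<le> opnorm D W"
    using pos by (simp add: norm_divide)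
  then show ?thesis using pos by (simp add: field_simps)
qed

lemma opnorm_entry: "i < D \<Longrightarrow> k < D \<Longrightarrow> cmod (W i k) \<le> opnorm D W"
proof -
  assume i: "i < D" and k: "k < D"
  let ?e = "\<lambda>j. if j = k then 1 else (0::complex)"
  have "(\<Sum>i<D. (cmod (?e i))\<^sup>2) = (\<Sum>i<D. if i = k then 1 else 0)" by (rule sum.cong) auto
  also have "\<dots> = 1" using k by simp
  finally have "vnorm D ?e = 1" unfolding vnorm_def by simp
  then have "vnorm D (mvec D W ?e) \<le> opnorm D W" by (simp add: opnorm_upper)
  moreover have "mvec D W ?e i = W i k" using i k by (simp add: mvec_def mult_if01)
  ultimately show ?thesis using cmod_le_vnorm[OF i, of "mvec D W ?e"] by simp
qed

lemma vnorm_ip: "vnorm D (mvec D A v) ^ 2 = Re (ip D v (mvec D (mmul D (adj A) A) v))"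
proof -
  have "complex_of_real ((vnorm D (mvec D A v))\<^sup>2) = ip D (mvec D A v) (mvec D A v)" by (simp add: ip_self)
  also have "\<dots> = ip D v (mvec D (mmul D (adj A) A) v)" by (simp add: mvec_adj mvec_mmul)
  finally show ?thesis by (metis Re_complex_of_real)
qed

lemma unitary_opnorm: "unitary D U \<Longrightarrow> opnorm D U \<le> 1"
proof (rule opnorm_least)
  fix v assume U: "unitary D U" and v: "vnorm D v \<le> 1"
  have "(vnorm D (mvec D U v))\<^sup>2 = Re (ip D v (mvec D (idm D) v))" using U by (simp add: vnorm_ip unitary_def)
  also have "\<dots> = Re (ip D v v)"
  proof -
    have "ip D v (mvec D (idm D) v) = ip D v v" by (rule ip_cong) (simp add: mvec_idm)
    then show ?thesis by simp
  qed
  also have "\<dots> = (vnorm D v)\<^sup>2" by (simp add: ip_self)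
  finally have "(vnorm D (mvec D U v))\<^sup>2 = (vnorm D v)\<^sup>2" .
  then have "vnorm D (mvec D U v) = vnorm D v"
    using power2_eq_iff_nonneg[OF vnorm_nonneg vnorm_nonneg] by blast
  then show "vnorm D (mvec D U v) \<le> 1" using v by simp
qed

lemma opnorm_BBadj:
  assumes B: "opnorm D B \<le> 1"
  shows "opnorm D (mmul D B (adj B)) \<le> 1"
proof (rule opnorm_least)
  fix v assume v: "vnorm D v \<le> 1"
  let ?w = "mvec D (adj B) v"
  have Bw: "vnorm D (mvec D B u) \<le> vnorm D u" for u
    using opnorm_mult[of D B u] mult_right_mono[OF B vnorm_nonneg[of D u]] by simp
  have "(vnorm D ?w)\<^sup>2 = Re (ip D v (mvec D (mmul D (adj (adj B)) (adj B)) v))" by (rule vnorm_ip)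
  also have "\<dots> \<le> cmod (ip D v (mvec D (mmul D B (adj B)) v))" by (simp add: complex_Re_le_cmod)
  also have "\<dots> \<le> vnorm D v * vnorm D (mvec D B ?w)" by (simp add: ip_cs mvec_mmul)
  also have "\<dots> \<le> vnorm D v * vnorm D ?w" by (intro mult_left_mono Bw vnorm_nonneg)
  finally have "(vnorm D ?w)\<^sup>2 \<le> vnorm D v * vnorm D ?w" .
  then have ww: "vnorm D ?w * vnorm D ?w \<le> vnorm D v * vnorm D ?w" by (simp add: power2_eq_square)
  have "vnorm D ?w \<le> vnorm D v"
  proof (cases "vnorm D ?w = 0")
    case True then show ?thesis using vnorm_nonneg[of D v] by simp
  next
    case False then have "vnorm D ?w > 0" using vnorm_nonneg[of D ?w] by simp
    then show ?thesis using ww by (rule mult_right_le_imp_le[rotated])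
  qed
  then show "vnorm D (mvec D (mmul D B (adj B)) v) \<le> 1"
    using Bw[of ?w] v by (simp add: mvec_mmul)
qed


definition qf :: "nat \<Rightarrow> cmat \<Rightarrow> (nat \<Rightarrow> complex) \<Rightarrow> (nat \<Rightarrow> complex) \<Rightarrow> complex" where
  "qf D R u w = (\<Sum>i<D. \<Sum>j<D. cnj (u i) * R i j * w j)"

lemma psd_qf: "psd D R \<Longrightarrow> Im (qf D R v v) = 0 \<and> Re (qf D R v v) \<ge> 0"
  unfolding psd_def qf_def Let_def by blast

lemma qf_expand: "qf D R (\<lambda>i. u i + c * w i) (\<lambda>i. u i + c * w i) =
   qf D R u u + c * qf D R u w + cnj c * qf D R w u + cnj c * c * qf D R w w"
  unfolding qf_def
  by (simp add: algebra_simps sum.distrib sum_distrib_left)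

lemma qf_herm:
  assumes R: "psd D R"
  shows "qf D R w u = cnj (qf D R u w)"
proof -
  let ?A = "qf D R u u" and ?C = "qf D R w w" and ?b = "qf D R u w" and ?g = "qf D R w u"
  have "Im (qf D R (\<lambda>i. u i + 1 * w i) (\<lambda>i. u i + 1 * w i)) = 0" using psd_qf[OF R] by blast
  then have 1: "Im (?A + ?b + ?g + ?C) = 0" unfolding qf_expand by simp
  have "Im (qf D R (\<lambda>i. u i + \<i> * w i) (\<lambda>i. u i + \<i> * w i)) = 0" using psd_qf[OF R] by blast
  then have 2: "Im (?A + \<i> * ?b - \<i> * ?g + ?C) = 0" unfolding qf_expand by simp
  have A: "Im ?A = 0" "Im ?C = 0" using psd_qf[OF R] by blast+
  show ?thesis using 1 2 A by (simp add: complex_eq_iff)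
qed

lemma cnj_mult_self: "cnj z * z = complex_of_real ((cmod z)\<^sup>2)"
  by (metis complex_norm_square mult.commute)

lemma qf_cs:
  assumes R: "psd D R"
  shows "(cmod (qf D R u w))\<^sup>2 \<le> Re (qf D R u u) * Re (qf D R w w)"
proof -
  let ?A = "Re (qf D R u u)" and ?C = "Re (qf D R w w)" and ?b = "qf D R u w"
  have IA: "Im (qf D R u u) = 0" "Im (qf D R w w) = 0" and A0: "?A \<ge> 0" "?C \<ge> 0" using psd_qf[OF R] by blast+
  have Cw: "qf D R w w = complex_of_real ?C" using IA by (simp add: complex_eq_iff)
  have h: "qf D R w u = cnj ?b" by (rule qf_herm[OF R])
  have val: "?A - 2 * Re (c * ?b) + (cmod c)\<^sup>2 * ?C \<ge> 0" for c
  proof -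
    have "Re (qf D R (\<lambda>i. u i + (- c) * w i) (\<lambda>i. u i + (- c) * w i)) \<ge> 0" using psd_qf[OF R] by blast
    then have "Re (qf D R u u + (- c) * ?b + cnj (- c) * cnj ?b + cnj (- c) * (- c) * qf D R w w) \<ge> 0"
      unfolding qf_expand h .
    moreover have "cnj (- c) * (- c) * qf D R w w = complex_of_real ((cmod c)\<^sup>2 * ?C)"
      by (subst Cw) (simp add: cnj_mult_self)
    moreover have "cnj (- c) * cnj ?b = cnj ((- c) * ?b)" by simp
    moreover have "Re ((- c) * ?b + cnj ((- c) * ?b)) = - 2 * Re (c * ?b)" by simp
    moreover have "cmod c * cmod c = Re c * Re c + Im c * Im c"
      using cmod_power2[of c] by (simp add: power2_eq_square)
    ultimately show ?thesis by (simp add: power2_eq_square)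
  qed
  show ?thesis
  proof (cases "?C > 0")
    case True
    let ?c = "cnj ?b / complex_of_real ?C"
    have v: "?A - 2 * Re (?c * ?b) + (cmod ?c)\<^sup>2 * ?C \<ge> 0" by (rule val)
    have "?c * ?b = (cnj ?b * ?b) / complex_of_real ?C" by (simp add: divide_inverse mult_ac)
    also have "\<dots> = complex_of_real ((cmod ?b)\<^sup>2) / complex_of_real ?C" by (simp only: cnj_mult_self)
    also have "\<dots> = complex_of_real ((cmod ?b)\<^sup>2 / ?C)" by simp
    finally have e0: "?c * ?b = complex_of_real ((cmod ?b)\<^sup>2 / ?C)" .
    have e1: "Re (?c * ?b) = (cmod ?b)\<^sup>2 / ?C" unfolding e0 by (rule Re_complex_of_real)
    have e2: "(cmod ?c)\<^sup>2 * ?C = (cmod ?b)\<^sup>2 / ?C"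
      using True by (simp add: norm_divide power_divide power2_eq_square)
    have "?A - 2 * ((cmod ?b)\<^sup>2 / ?C) + (cmod ?b)\<^sup>2 / ?C \<ge> 0" using v unfolding e1 e2 .
    then have "(cmod ?b)\<^sup>2 / ?C \<le> ?A" by linarith
    then show ?thesis using True by (simp add: divide_le_eq mult.commute)
  next
    case False
    then have C0: "?C = 0" using A0 by simp
    show ?thesis
    proof (cases "?b = 0")
      case False
      let ?t = "(?A + 1) / (2 * (cmod ?b)\<^sup>2)"
      have pos: "(cmod ?b)\<^sup>2 > 0" using False by simp
      let ?c = "complex_of_real ?t * cnj ?b"
      have v: "?A - 2 * Re (?c * ?b) + (cmod ?c)\<^sup>2 * ?C \<ge> 0" by (rule val)
      have "?c * ?b = complex_of_real ?t * (cnj ?b * ?b)" by (simp only: mult.assoc)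
      also have "\<dots> = complex_of_real (?t * (cmod ?b)\<^sup>2)" by (simp only: cnj_mult_self of_real_mult)
      finally have e0: "?c * ?b = complex_of_real (?t * (cmod ?b)\<^sup>2)" .
      have e1: "Re (?c * ?b) = ?t * (cmod ?b)\<^sup>2" unfolding e0 by (rule Re_complex_of_real)
      have "?A - 2 * (?t * (cmod ?b)\<^sup>2) + (cmod ?c)\<^sup>2 * 0 \<ge> 0" using v unfolding e1 C0 .
      then have "?A - 2 * (?t * (cmod ?b)\<^sup>2) \<ge> 0" by simp
      moreover have "2 * (?t * (cmod ?b)\<^sup>2) = ?A + 1" using pos by (simp add: field_simps)
      ultimately show ?thesis by simp
    qed (simp add: C0)
  qed
qed


definition colv :: "cmat \<Rightarrow> nat \<Rightarrow> nat \<Rightarrow> complex" where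
  "colv B i = (\<lambda>k. B k i)"
definition ev :: "nat \<Rightarrow> nat \<Rightarrow> complex" where
  "ev i = (\<lambda>k. if k = i then 1 else 0)"

lemma qf_ev_right: "i < D \<Longrightarrow> qf D R u (ev i) = (\<Sum>k<D. cnj (u k) * R k i)"
  unfolding qf_def ev_def by (simp add: mult_if01 if_distrib[of "\<lambda>x. _ * x"] sum.delta' cong: if_cong)

lemma hs_as_qf: "hs D B R = (\<Sum>i<D. qf D R (colv B i) (ev i))"
proof -
  have "hs D B R = (\<Sum>i<D. \<Sum>k<D. cnj (B k i) * R k i)"
    by (simp add: hs_def tr_def mmul_def adj_def)
  also have "\<dots> = (\<Sum>i<D. qf D R (colv B i) (ev i))"
    by (rule sum.cong) (simp_all add: qf_ev_right colv_def)
  finally show ?thesis .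
qed

lemma qf_ev_ev: "i < D \<Longrightarrow> qf D R (ev i) (ev i) = R i i"
proof -
  assume i: "i < D"
  have "qf D R (ev i) (ev i) = (\<Sum>k<D. cnj (ev i k) * R k i)" using i by (rule qf_ev_right)
  also have "\<dots> = (\<Sum>k<D. if k = i then R k i else 0)" by (rule sum.cong) (auto simp: ev_def)
  finally show ?thesis using i by simp
qed

lemma hs_BBadj: "hs D (mmul D B (adj B)) R = (\<Sum>i<D. qf D R (colv B i) (colv B i))"
proof -
  have "hs D (mmul D B (adj B)) R = (\<Sum>j<D. \<Sum>k<D. \<Sum>i<D. cnj (B k i) * R k j * B j i)"
    unfolding hs_def adj_mmul adj_adj tr_def mmul_def
    by (auto simp: adj_def sum_distrib_right sum_distrib_left mult_ac intro!: sum.cong)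
  also have "\<dots> = (\<Sum>k<D. \<Sum>j<D. \<Sum>i<D. cnj (B k i) * R k j * B j i)" by (rule sum.swap)
  also have "\<dots> = (\<Sum>k<D. \<Sum>i<D. \<Sum>j<D. cnj (B k i) * R k j * B j i)" by (rule sum.cong, simp, rule sum.swap)
  also have "\<dots> = (\<Sum>i<D. \<Sum>k<D. \<Sum>j<D. cnj (B k i) * R k j * B j i)" by (rule sum.swap)
  also have "\<dots> = (\<Sum>i<D. qf D R (colv B i) (colv B i))" by (simp add: qf_def colv_def)
  finally show ?thesis .
qed

lemma cmod_le_sqrt: "(cmod x)\<^sup>2 \<le> a * b \<Longrightarrow> 0 \<le> a \<Longrightarrow> 0 \<le> b \<Longrightarrow> cmod x \<le> sqrt a * sqrt b"
  by (metis real_sqrt_abs abs_norm_cancel real_sqrt_le_mono real_sqrt_mult)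

lemma real_cs_sqrt:
  fixes D :: nat
  assumes "\<And>i. i < D \<Longrightarrow> 0 \<le> a i" "\<And>i. i < D \<Longrightarrow> 0 \<le> b i"
  shows "(\<Sum>i<D. sqrt (a i) * sqrt (b i)) \<le> sqrt (\<Sum>i<D. a i) * sqrt (\<Sum>i<D. b i)"
proof -
  let ?u = "\<lambda>i. complex_of_real (sqrt (a i))" and ?w = "\<lambda>i. complex_of_real (sqrt (b i))"
  have "(\<Sum>i<D. sqrt (a i) * sqrt (b i)) = (\<Sum>i<D. cmod (?u i) * cmod (?w i))"
    using assms by (intro sum.cong) auto
  also have "\<dots> \<le> vnorm D ?u * vnorm D ?w" by (rule sum_prod_le_vnorm)
  also have "vnorm D ?u = sqrt (\<Sum>i<D. a i)" unfolding vnorm_def using assms(1) by (intro arg_cong[where f=sqrt] sum.cong) auto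
  also have "vnorm D ?w = sqrt (\<Sum>i<D. b i)" unfolding vnorm_def using assms(2) by (intro arg_cong[where f=sqrt] sum.cong) auto
  finally show ?thesis .
qed

lemma state_hs_step:
  assumes R: "psd D R" and trR: "tr D R = 1"
  shows "cmod (hs D B R) \<le> sqrt (Re (hs D (mmul D B (adj B)) R))"
proof -
  have nn: "0 \<le> Re (qf D R v v)" for v using psd_qf[OF R] by blast
  have "cmod (hs D B R) \<le> (\<Sum>i<D. cmod (qf D R (colv B i) (ev i)))"
    unfolding hs_as_qf by (rule norm_sum)
  also have "\<dots> \<le> (\<Sum>i<D. sqrt (Re (qf D R (colv B i) (colv B i))) * sqrt (Re (qf D R (ev i) (ev i))))"
    by (intro sum_mono cmod_le_sqrt qf_cs[OF R] nn)
  also have "\<dots> \<le> sqrt (\<Sum>i<D. Re (qf D R (colv B i) (colv B i))) * sqrt (\<Sum>i<D. Re (qf D R (ev i) (ev i)))"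
    by (rule real_cs_sqrt) (rule nn)+
  also have "(\<Sum>i<D. Re (qf D R (ev i) (ev i))) = Re (tr D R)"
    by (simp add: tr_def qf_ev_ev)
  also have "(\<Sum>i<D. Re (qf D R (colv B i) (colv B i))) = Re (hs D (mmul D B (adj B)) R)"
    by (simp add: hs_BBadj)
  finally show ?thesis using trR by simp
qed

lemma hs_bound: "cmod (hs D B R) \<le> (\<Sum>i<D. \<Sum>k<D. cmod (B k i) * cmod (R k i))"
proof -
  have "hs D B R = (\<Sum>i<D. \<Sum>k<D. cnj (B k i) * R k i)"
    by (simp add: hs_def tr_def mmul_def adj_def)
  then have "cmod (hs D B R) \<le> (\<Sum>i<D. cmod (\<Sum>k<D. cnj (B k i) * R k i))" by (simp add: norm_sum)
  also have "\<dots> \<le> (\<Sum>i<D. \<Sum>k<D. cmod (B k i) * cmod (R k i))"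
    by (intro sum_mono) (simp add: norm_sum norm_mult order_trans[OF norm_sum])
  finally show ?thesis .
qed

lemma hs_bound_op: "opnorm D B \<le> 1 \<Longrightarrow> cmod (hs D B R) \<le> (\<Sum>i<D. \<Sum>k<D. cmod (R k i))"
proof -
  assume B: "opnorm D B \<le> 1"
  have "cmod (hs D B R) \<le> (\<Sum>i<D. \<Sum>k<D. cmod (B k i) * cmod (R k i))" by (rule hs_bound)
  also have "\<dots> \<le> (\<Sum>i<D. \<Sum>k<D. cmod (R k i))"
  proof (intro sum_mono)
    fix i k assume "i \<in> {..<D}" "k \<in> {..<D}"
    then have "cmod (B k i) \<le> 1" using opnorm_entry[of k D i B] B by simp
    then show "cmod (B k i) * cmod (R k i) \<le> cmod (R k i)" by (simp add: mult_left_le_one_le)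
  qed
  finally show ?thesis .
qed

lemma state_hs_le:
  assumes R: "psd D R" and trR: "tr D R = 1" and B: "opnorm D B \<le> 1"
  shows "cmod (hs D B R) \<le> 1"
proof -
  define S where "S = {cmod (hs D B' R) | B'. opnorm D B' \<le> 1}"
  define M where "M = Sup S"
  have bdd: "bdd_above S" unfolding S_def using hs_bound_op by (intro bdd_aboveI) blast
  have ne: "opnorm D (\<lambda>i j. 0) \<le> 1"
    by (rule opnorm_least) (simp add: mvec_def vnorm_def)
  have upper: "cmod (hs D B' R) \<le> M" if "opnorm D B' \<le> 1" for B'
    unfolding M_def by (rule cSup_upper[OF _ bdd]) (use that S_def in blast)
  have M0: "0 \<le> M" using upper[OF ne] by (meson norm_ge_zero order_trans)
  have "M \<le> sqrt M"
    unfolding M_def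
  proof (rule cSup_least)
    show "S \<noteq> {}" using ne S_def by blast
  next
    fix x assume "x \<in> S"
    then obtain B' where x: "x = cmod (hs D B' R)" and B': "opnorm D B' \<le> 1" unfolding S_def by blast
    have "x \<le> sqrt (Re (hs D (mmul D B' (adj B')) R))" unfolding x by (rule state_hs_step[OF R trR])
    also have "\<dots> \<le> sqrt (cmod (hs D (mmul D B' (adj B')) R))" by (simp add: complex_Re_le_cmod)
    also have "\<dots> \<le> sqrt M" using upper[OF opnorm_BBadj[OF B']] by simp
    finally show "x \<le> sqrt (Sup S)" unfolding M_def .
  qed
  then have "M * M \<le> sqrt M * sqrt M" using M0 by (intro mult_mono) auto
  then have MM: "M * M \<le> M * 1" using M0 by simp
  have "M \<le> 1"
  proof (cases "M = 0")
    case False then have "0 < M" using M0 by simp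
    then show ?thesis using MM by (rule mult_left_le_imp_le[rotated])
  qed simp
  then show ?thesis using upper[OF B] by linarith
qed


lemma zero_opnorm: "opnorm D (\<lambda>i j. 0) \<le> 1"
  by (rule opnorm_least) (simp add: mvec_def vnorm_def)

lemma zero_mats': "(\<lambda>i j. 0) \<in> mats D"
  by (simp add: mats_def)

lemma tnorm_bdd: "bdd_above {cmod (hs D B X) | B. B \<in> mats D \<and> opnorm D B \<le> 1}"
  using hs_bound_op by (intro bdd_aboveI) blast

lemma tnorm_upper: "B \<in> mats D \<Longrightarrow> opnorm D B \<le> 1 \<Longrightarrow> cmod (hs D B X) \<le> tnorm D X"
  unfolding tnorm_def by (rule cSup_upper[OF _ tnorm_bdd]) blast

lemma tnorm_least: "(\<And>B. B \<in> mats D \<Longrightarrow> opnorm D B \<le> 1 \<Longrightarrow> cmod (hs D B X) \<le> c) \<Longrightarrow> tnorm D X \<le> c"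
  unfolding tnorm_def
proof (rule cSup_least)
  show "{cmod (hs D B X) |B. B \<in> mats D \<and> opnorm D B \<le> 1} \<noteq> {}"
    using zero_opnorm zero_mats' by blast
qed auto

lemma tnorm_nonneg: "tnorm D X \<ge> 0"
  using tnorm_upper[OF zero_mats' zero_opnorm, of D X] norm_ge_zero order_trans by blast

lemma tnorm_l1: "tnorm D X \<le> (\<Sum>i<D. \<Sum>k<D. cmod (X k i))"
  by (rule tnorm_least) (rule hs_bound_op)

definition eu :: "nat \<Rightarrow> nat \<Rightarrow> cmat" where
  "eu r c = (\<lambda>i j. if i = r \<and> j = c then 1 else 0)"

lemma eu_mats: "r < D \<Longrightarrow> c < D \<Longrightarrow> eu r c \<in> mats D"
  by (auto simp: eu_def mats_def)

lemma eu_opnorm: "c < D \<Longrightarrow> opnorm D (eu r c) \<le> 1"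
proof (rule opnorm_least)
  fix v assume c: "c < D" and v: "vnorm D v \<le> 1"
  have "vnorm D (mvec D (eu r c) v) \<le> (\<Sum>i<D. cmod (mvec D (eu r c) v i))" by (rule vnorm_le_l1)
  also have "\<dots> = (\<Sum>i<D. if i = r then cmod (v c) else 0)"
    using c by (intro sum.cong) (auto simp: mvec_def eu_def if_distrib[of "\<lambda>x. x * _"] cong: if_cong)
  also have "\<dots> \<le> cmod (v c)" by simp
  also have "\<dots> \<le> vnorm D v" using c by (rule cmod_le_vnorm)
  finally show "vnorm D (mvec D (eu r c) v) \<le> 1" using v by simp
qed

lemma hs_eu: "r < D \<Longrightarrow> c < D \<Longrightarrow> hs D (eu r c) X = X r c"
proof -
  assume r: "r < D" and c: "c < D"
  have "hs D (eu r c) X = (\<Sum>i<D. \<Sum>k<D. cnj (eu r c k i) * X k i)"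
    by (simp add: hs_def tr_def mmul_def adj_def)
  also have "\<dots> = (\<Sum>i<D. if i = c then X r c else 0)"
    using r by (intro sum.cong) (auto simp: eu_def if_distrib[of cnj] if_distrib[of "\<lambda>x. x * _"] cong: if_cong)
  also have "\<dots> = X r c" using c by simp
  finally show ?thesis .
qed

lemma entry_le_tnorm: "r < D \<Longrightarrow> c < D \<Longrightarrow> cmod (X r c) \<le> tnorm D X"
  using tnorm_upper[OF eu_mats eu_opnorm, of r D c X] hs_eu by simp

lemma lin_zero:
  assumes "lin_superop d \<Phi>"
  shows "\<Phi> (\<lambda>i j. 0) = (\<lambda>i j. 0)"
proof -
  have m: "(\<lambda>i j. 0) \<in> mats d" by (rule zero_mats')
  have "madd (\<lambda>i j. 0) (smul 1 (\<lambda>i j. 0)) = (\<lambda>i j. (0::complex))" by (simp add: madd_def smul_def)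
  then have "\<Phi> (\<lambda>i j. 0) = madd (\<Phi> (\<lambda>i j. 0)) (smul 1 (\<Phi> (\<lambda>i j. 0)))"
    using assms m unfolding lin_superop_def by metis
  then have "\<And>i j. \<Phi> (\<lambda>i j. 0) i j = \<Phi> (\<lambda>i j. 0) i j + \<Phi> (\<lambda>i j. 0) i j"
    by (metis madd_def smul_one)
  then show ?thesis by (intro ext) simp
qed

lemma lin_lc:
  assumes lin: "lin_superop d \<Phi>" and fin: "finite S" and A: "\<And>k. k \<in> S \<Longrightarrow> A k \<in> mats d"
  shows "\<Phi> (lc S c A) = lc S c (\<lambda>k. \<Phi> (A k))"
  using fin A
proof (induction S rule: finite_induct)
  case empty
  then show ?case using lin_zero[OF lin] by (simp add: lc_def)
next
  case (insert x S)
  have m1: "lc S c A \<in> mats d" using insert by (intro lc_mats) auto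
  have m2: "A x \<in> mats d" using insert by auto
  have e: "lc (insert x S) c A = madd (lc S c A) (smul (c x) (A x))"
    using insert by (auto simp: lc_def madd_def smul_def intro!: ext)
  have "\<Phi> (lc (insert x S) c A) = madd (\<Phi> (lc S c A)) (smul (c x) (\<Phi> (A x)))"
    unfolding e using lin m1 m2 unfolding lin_superop_def by blast
  also have "\<dots> = lc (insert x S) c (\<lambda>k. \<Phi> (A k))"
    using insert by (auto simp: lc_def madd_def smul_def intro!: ext)
  finally show ?case .
qed

lemma mats_expand: "A \<in> mats d \<Longrightarrow> A = lc ({..<d} \<times> {..<d}) (\<lambda>(k, l). A k l) (\<lambda>(k, l). eu k l)"
proof (rule ext, rule ext)
  fix i j assume A: "A \<in> mats d"
  have "lc ({..<d} \<times> {..<d}) (\<lambda>(k, l). A k l) (\<lambda>(k, l). eu k l) i j =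
        (\<Sum>(k, l)\<in>{..<d} \<times> {..<d}. if k = i \<and> l = j then A k l else 0)"
    unfolding lc_def by (intro sum.cong) (auto simp: eu_def)
  also have "\<dots> = (if i < d \<and> j < d then A i j else 0)"
  proof (cases "i < d \<and> j < d")
    case True
    have "(\<Sum>(k, l)\<in>{..<d} \<times> {..<d}. if k = i \<and> l = j then A k l else 0) =
          (\<Sum>x\<in>{..<d} \<times> {..<d}. if x = (i, j) then A i j else 0)"
      by (rule sum.cong[OF refl]) (auto split: prod.splits)
    then show ?thesis using True by simp
  next
    case False
    have "(\<Sum>(k, l)\<in>{..<d} \<times> {..<d}. if k = i \<and> l = j then A k l else 0) = 0"
      using False by (intro sum.neutral) auto
    then show ?thesis using False by auto
  qed
  also have "\<dots> = A i j" using A by (auto simp: mats_def)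
  finally show "A i j = lc ({..<d} \<times> {..<d}) (\<lambda>(k, l). A k l) (\<lambda>(k, l). eu k l) i j" by simp
qed

lemma lin_entry_bound:
  assumes lin: "lin_superop d \<Phi>" and A: "A \<in> mats d" and b: "\<And>k l. cmod (A k l) \<le> 1"
  shows "cmod (\<Phi> A i j) \<le> (\<Sum>(k, l)\<in>{..<d} \<times> {..<d}. cmod (\<Phi> (eu k l) i j))"
proof -
  have "\<Phi> A = lc ({..<d} \<times> {..<d}) (\<lambda>(k, l). A k l) (\<lambda>x. \<Phi> ((\<lambda>(k, l). eu k l) x))"
    by (subst mats_expand[OF A], rule lin_lc[OF lin]) (auto simp: eu_mats)
  then have "\<Phi> A i j = (\<Sum>x\<in>{..<d} \<times> {..<d}. (\<lambda>(k, l). A k l) x * \<Phi> ((\<lambda>(k, l). eu k l) x) i j)"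
    by (simp add: lc_def)
  also have "\<dots> = (\<Sum>(k, l)\<in>{..<d} \<times> {..<d}. A k l * \<Phi> (eu k l) i j)"
    by (intro sum.cong) auto
  finally have "cmod (\<Phi> A i j) \<le> (\<Sum>(k, l)\<in>{..<d} \<times> {..<d}. cmod (A k l * \<Phi> (eu k l) i j))"
    by (simp add: norm_sum case_prod_unfold)
  also have "\<dots> \<le> (\<Sum>(k, l)\<in>{..<d} \<times> {..<d}. cmod (\<Phi> (eu k l) i j))"
    by (intro sum_mono) (auto simp: norm_mult b mult_left_le_one_le)
  finally show ?thesis .
qed


lemma block_mats: "block d X k l \<in> mats d"
  by (auto simp: block_def mats_def)

lemma div_lt_sq: "r < d * d \<Longrightarrow> r div d < (d::nat)"
  by (simp add: less_mult_imp_div_less)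

lemma idx_lt_sq: "k < d \<Longrightarrow> i < d \<Longrightarrow> k * d + i < d * (d::nat)"
proof -
  assume "k < d" "i < d"
  then have "k * d + i < k * d + d" by simp
  also have "\<dots> = Suc k * d" by simp
  also have "\<dots> \<le> d * d" using \<open>k < d\<close> by (intro mult_le_mono1) simp
  finally show ?thesis .
qed

lemma block_bound: "tnorm (d * d) X \<le> 1 \<Longrightarrow> k < d \<Longrightarrow> l < d \<Longrightarrow> cmod (block d X k l i j) \<le> 1"
  unfolding block_def using entry_le_tnorm[OF idx_lt_sq idx_lt_sq, of k d i l j X] by auto

lemma tens_entry_bound:
  assumes lin: "lin_superop d \<Phi>" and X: "tnorm (d * d) X \<le> 1"
  shows "cmod (tens_id d d \<Phi> X r c) \<le> (\<Sum>(a, b)\<in>{..<d} \<times> {..<d}. cmod (\<Phi> (eu a b) (r mod d) (c mod d)))"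
proof (cases "r < d * d \<and> c < d * d")
  case True
  then have "tens_id d d \<Phi> X r c = \<Phi> (block d X (r div d) (c div d)) (r mod d) (c mod d)"
    by (simp add: tens_id_def)
  also have "cmod \<dots> \<le> (\<Sum>(a, b)\<in>{..<d} \<times> {..<d}. cmod (\<Phi> (eu a b) (r mod d) (c mod d)))"
    by (rule lin_entry_bound[OF lin block_mats]) (use block_bound[OF X] div_lt_sq True in auto)
  finally show ?thesis .
next
  case False
  then show ?thesis by (auto simp: tens_id_def intro: sum_nonneg)
qed

lemma diamond_bdd:
  assumes lin: "lin_superop d \<Phi>"
  shows "bdd_above {tnorm (d * d) (tens_id d d \<Phi> X) | X. X \<in> mats (d * d) \<and> tnorm (d * d) X \<le> 1}"
proof (rule bdd_aboveI)
  fix x assume "x \<in> {tnorm (d * d) (tens_id d d \<Phi> X) | X. X \<in> mats (d * d) \<and> tnorm (d * d) X \<le> 1}"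
  then obtain X where x: "x = tnorm (d * d) (tens_id d d \<Phi> X)" and X: "tnorm (d * d) X \<le> 1" by blast
  have "x \<le> (\<Sum>i<d * d. \<Sum>k<d * d. cmod (tens_id d d \<Phi> X k i))" unfolding x by (rule tnorm_l1)
  also have "\<dots> \<le> (\<Sum>i<d * d. \<Sum>k<d * d. \<Sum>(a, b)\<in>{..<d} \<times> {..<d}. cmod (\<Phi> (eu a b) (k mod d) (i mod d)))"
    by (intro sum_mono tens_entry_bound[OF lin X])
  finally show "x \<le> (\<Sum>i<d * d. \<Sum>k<d * d. \<Sum>(a, b)\<in>{..<d} \<times> {..<d}. cmod (\<Phi> (eu a b) (k mod d) (i mod d)))" .
qed

lemma diamond_upper:
  "lin_superop d \<Phi> \<Longrightarrow> X \<in> mats (d * d) \<Longrightarrow> tnorm (d * d) X \<le> 1 \<Longrightarrow> tnorm (d * d) (tens_id d d \<Phi> X) \<le> diamond d \<Phi>"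
  unfolding diamond_def by (rule cSup_upper[OF _ diamond_bdd]) blast+

lemma tnorm_zero: "tnorm D (\<lambda>i j. 0) = 0"
proof -
  have "tnorm D (\<lambda>i j. 0) \<le> 0"
    by (rule tnorm_least) (simp add: hs_def tr_def mmul_def)
  then show ?thesis using tnorm_nonneg[of D "\<lambda>i j. 0"] by simp
qed

lemma diamond_least:
  "(\<And>X. X \<in> mats (d * d) \<Longrightarrow> tnorm (d * d) X \<le> 1 \<Longrightarrow> tnorm (d * d) (tens_id d d \<Phi> X) \<le> c) \<Longrightarrow> diamond d \<Phi> \<le> c"
  unfolding diamond_def
proof (rule cSup_least)
  show "{tnorm (d * d) (tens_id d d \<Phi> X) |X. X \<in> mats (d * d) \<and> tnorm (d * d) X \<le> 1} \<noteq> {}"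
    using zero_mats'[of "d * d"] tnorm_zero[of "d * d"] by force
qed auto

lemma diamond_nonneg: "lin_superop d \<Phi> \<Longrightarrow> diamond d \<Phi> \<ge> 0"
  using diamond_upper[of d \<Phi> "\<lambda>i j. 0"] zero_mats'[of "d * d"] tnorm_zero[of "d * d"]
    tnorm_nonneg[of "d * d" "tens_id d d \<Phi> (\<lambda>i j. 0)"] by force

lemma hs_restrict:
  assumes X: "X \<in> mats d" and dD: "d \<le> D"
  shows "hs D B X = hs d B X"
proof -
  have "hs D B X = (\<Sum>i<D. \<Sum>k<D. cnj (B k i) * X k i)" by (simp add: hs_def tr_def mmul_def adj_def)
  also have "\<dots> = (\<Sum>i<d. \<Sum>k<D. cnj (B k i) * X k i)"
    using X dD by (intro sum.mono_neutral_right) (auto simp: mats_def intro!: sum.neutral)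
  also have "\<dots> = (\<Sum>i<d. \<Sum>k<d. cnj (B k i) * X k i)"
    using X dD by (intro sum.cong refl sum.mono_neutral_right) (auto simp: mats_def)
  also have "\<dots> = hs d B X" by (simp add: hs_def tr_def mmul_def adj_def)
  finally show ?thesis .
qed

lemma vnorm_mono: "d \<le> D \<Longrightarrow> vnorm d v \<le> vnorm D v"
  unfolding vnorm_def by (intro real_sqrt_le_mono sum_mono2) auto

lemma vnorm_restrict: "(\<And>i. d \<le> i \<Longrightarrow> v i = 0) \<Longrightarrow> d \<le> D \<Longrightarrow> vnorm D v = vnorm d v"
  unfolding vnorm_def by (intro arg_cong[where f=sqrt] sum.mono_neutral_right) auto

lemma opnorm_restrict_le:
  assumes dD: "d \<le> D"
  shows "opnorm d B \<le> opnorm D B"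
proof (rule opnorm_least)
  fix v assume v: "vnorm d v \<le> 1"
  let ?v = "\<lambda>i. if i < d then v i else 0"
  have "vnorm D ?v = vnorm d ?v" using dD by (intro vnorm_restrict) auto
  also have "\<dots> = vnorm d v" by (intro vnorm_cong) auto
  finally have v1: "vnorm D ?v \<le> 1" using v by simp
  have "vnorm d (mvec d B v) = vnorm d (mvec D B ?v)"
  proof (rule vnorm_cong)
    fix i assume i: "i < d"
    have "mvec D B ?v i = (\<Sum>k<D. B i k * ?v k)" using i dD by (simp add: mvec_def)
    also have "\<dots> = (\<Sum>k<d. B i k * v k)"
      using dD by (subst sum.mono_neutral_right[of "{..<D}" "{..<d}"]) auto
    finally show "mvec d B v i = mvec D B ?v i" using i by (simp add: mvec_def)
  qed
  also have "\<dots> \<le> vnorm D (mvec D B ?v)" using dD by (rule vnorm_mono)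
  also have "\<dots> \<le> opnorm D B" using v1 by (rule opnorm_upper)
  finally show "vnorm d (mvec d B v) \<le> opnorm D B" .
qed

lemma opnorm_extend_le:
  assumes dD: "d \<le> D" and W: "W \<in> mats d" and Wn: "opnorm d W \<le> 1"
  shows "opnorm D W \<le> 1"
proof (rule opnorm_least)
  fix v assume v: "vnorm D v \<le> 1"
  have "vnorm D (mvec D W v) = vnorm d (mvec D W v)"
    using W by (intro vnorm_restrict dD) (auto simp: mvec_def mats_def)
  also have "\<dots> = vnorm d (mvec d W v)"
  proof (rule vnorm_cong)
    fix i assume i: "i < d"
    have "(\<Sum>k<D. W i k * v k) = (\<Sum>k<d. W i k * v k)"
      using dD W by (intro sum.mono_neutral_right) (auto simp: mats_def)
    then show "mvec D W v i = mvec d W v i" using i dD by (simp add: mvec_def)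
  qed
  also have "\<dots> \<le> opnorm d W * vnorm d v" by (rule opnorm_mult)
  also have "\<dots> \<le> 1 * vnorm d v" using Wn by (intro mult_right_mono vnorm_nonneg)
  also have "\<dots> \<le> vnorm D v" using dD by (simp add: vnorm_mono)
  finally show "vnorm D (mvec D W v) \<le> 1" using v by simp
qed

lemma tens_id_small:
  assumes lin: "lin_superop d \<Phi>" and R: "R \<in> mats d"
  shows "tens_id d d \<Phi> R = \<Phi> R"
proof (rule ext, rule ext)
  fix r c
  have PR: "\<Phi> R \<in> mats d" using lin R by (simp add: lin_superop_def)
  have b00: "block d R 0 0 = R" using R by (auto simp: block_def mats_def intro!: ext)
  have bz: "block d R k l = (\<lambda>i j. 0)" if "k \<noteq> 0 \<or> l \<noteq> 0" for k l
  proof (rule ext, rule ext)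
    fix i j
    have "d \<le> k * d + i \<or> d \<le> l * d + j" using that by (auto simp: trans_le_add1)
    then show "block d R k l i j = 0" using R by (auto simp: block_def mats_def)
  qed
  show "tens_id d d \<Phi> R r c = \<Phi> R r c"
  proof (cases "r < d \<and> c < d")
    case True
    then show ?thesis by (simp add: tens_id_def b00 mult_less_mono1 less_le_trans[of _ d "d * d"])
  next
    case False
    then have "\<Phi> R r c = 0" using PR by (auto simp: mats_def)
    moreover have "tens_id d d \<Phi> R r c = 0"
    proof (cases "r < d * d \<and> c < d * d")
      case True
      then have "r div d \<noteq> 0 \<or> c div d \<noteq> 0" using False by (auto simp: div_eq_0_iff)
      then show ?thesis using True bz lin_zero[OF lin] by (simp add: tens_id_def)
    qed (auto simp: tens_id_def)
    ultimately show ?thesis by simp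
  qed
qed


lemma mats_mono: "X \<in> mats d \<Longrightarrow> d \<le> D \<Longrightarrow> X \<in> mats D"
  by (auto simp: mats_def)

lemma diamond_state:
  assumes lin: "lin_superop d \<Phi>" and R: "psd d \<rho>" and trR: "tr d \<rho> = 1"
    and W: "W \<in> mats d" and Wn: "opnorm d W \<le> 1" and d1: "1 \<le> d"
  shows "cmod (hs d W (\<Phi> \<rho>)) \<le> diamond d \<Phi>"
proof -
  have dd: "d \<le> d * d" using d1 by simp
  have Rm: "\<rho> \<in> mats d" using R by (simp add: psd_def)
  have PR: "\<Phi> \<rho> \<in> mats d" using lin Rm by (simp add: lin_superop_def)
  have t1: "tnorm (d * d) \<rho> \<le> 1"
  proof (rule tnorm_least)
    fix B assume B: "B \<in> mats (d * d)" "opnorm (d * d) B \<le> 1"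
    have "opnorm d B \<le> 1" using opnorm_restrict_le[OF dd, of B] B(2) by simp
    then have "cmod (hs d B \<rho>) \<le> 1" by (rule state_hs_le[OF R trR])
    then show "cmod (hs (d * d) B \<rho>) \<le> 1" using hs_restrict[OF Rm dd] by simp
  qed
  have "cmod (hs d W (\<Phi> \<rho>)) = cmod (hs (d * d) W (\<Phi> \<rho>))" using hs_restrict[OF PR dd] by simp
  also have "\<dots> \<le> tnorm (d * d) (\<Phi> \<rho>)"
    by (rule tnorm_upper[OF mats_mono[OF W dd] opnorm_extend_le[OF dd W Wn]])
  also have "\<dots> = tnorm (d * d) (tens_id d d \<Phi> \<rho>)" using tens_id_small[OF lin Rm] by simp
  also have "\<dots> \<le> diamond d \<Phi>" by (rule diamond_upper[OF lin mats_mono[OF Rm dd] t1])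
  finally show ?thesis .
qed

lemma tens_id_wsum:
  "tens_id d d (\<lambda>A i j. \<Sum>t\<in>T. c t * \<Phi> t A i j) X = lc T c (\<lambda>t. tens_id d d (\<Phi> t) X)"
  by (auto simp: tens_id_def lc_def intro!: ext)

lemma tnorm_lc:
  assumes fin: "finite T" and w: "\<And>t. t \<in> T \<Longrightarrow> w t \<ge> 0"
  shows "tnorm D (lc T (\<lambda>t. complex_of_real (w t)) Y) \<le> (\<Sum>t\<in>T. w t * tnorm D (Y t))"
proof (rule tnorm_least)
  fix B assume B: "B \<in> mats D" "opnorm D B \<le> 1"
  have "cmod (hs D B (lc T (\<lambda>t. complex_of_real (w t)) Y)) = cmod (\<Sum>t\<in>T. complex_of_real (w t) * hs D B (Y t))"
    by (simp add: hs_lc)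
  also have "\<dots> \<le> (\<Sum>t\<in>T. cmod (complex_of_real (w t) * hs D B (Y t)))" by (rule norm_sum)
  also have "\<dots> = (\<Sum>t\<in>T. w t * cmod (hs D B (Y t)))" using w by (intro sum.cong) (auto simp: norm_mult)
  also have "\<dots> \<le> (\<Sum>t\<in>T. w t * tnorm D (Y t))"
    using w tnorm_upper[OF B] by (intro sum_mono mult_left_mono) auto
  finally show "cmod (hs D B (lc T (\<lambda>t. complex_of_real (w t)) Y)) \<le> (\<Sum>t\<in>T. w t * tnorm D (Y t))" .
qed

lemma diamond_conv:
  assumes fin: "finite T" and w: "\<And>t. t \<in> T \<Longrightarrow> w t \<ge> 0" and lin: "\<And>t. t \<in> T \<Longrightarrow> lin_superop d (\<Phi> t)"
  shows "diamond d (\<lambda>A i j. \<Sum>t\<in>T. complex_of_real (w t) * \<Phi> t A i j) \<le> (\<Sum>t\<in>T. w t * diamond d (\<Phi> t))"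
proof (rule diamond_least)
  fix X assume X: "X \<in> mats (d * d)" "tnorm (d * d) X \<le> 1"
  have "tnorm (d * d) (tens_id d d (\<lambda>A i j. \<Sum>t\<in>T. complex_of_real (w t) * \<Phi> t A i j) X)
      = tnorm (d * d) (lc T (\<lambda>t. complex_of_real (w t)) (\<lambda>t. tens_id d d (\<Phi> t) X))"
    by (simp only: tens_id_wsum)
  also have "\<dots> \<le> (\<Sum>t\<in>T. w t * tnorm (d * d) (tens_id d d (\<Phi> t) X))" by (rule tnorm_lc[OF fin w])
  also have "\<dots> \<le> (\<Sum>t\<in>T. w t * diamond d (\<Phi> t))"
    using w diamond_upper[OF lin X(1) X(2)] by (intro sum_mono mult_left_mono) auto
  finally show "tnorm (d * d) (tens_id d d (\<lambda>A i j. \<Sum>t\<in>T. complex_of_real (w t) * \<Phi> t A i j) X)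
      \<le> (\<Sum>t\<in>T. w t * diamond d (\<Phi> t))" .
qed

lemma lin_wsum:
  assumes lin: "\<And>t. t \<in> T \<Longrightarrow> lin_superop d (\<Phi> t)"
  shows "lin_superop d (\<lambda>A i j. \<Sum>t\<in>T. c t * \<Phi> t A i j)"
  unfolding lin_superop_def
proof (intro conjI ballI allI)
  fix A assume A: "A \<in> mats d"
  have "\<forall>t\<in>T. \<Phi> t A \<in> mats d" using lin A by (simp add: lin_superop_def)
  then show "(\<lambda>i j. \<Sum>t\<in>T. c t * \<Phi> t A i j) \<in> mats d" by (auto simp: mats_def)
next
  fix A B a assume A: "A \<in> mats d" and B: "B \<in> mats d"
  have e: "\<Phi> t (madd A (smul a B)) = madd (\<Phi> t A) (smul a (\<Phi> t B))" if "t \<in> T" for t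
    using lin[OF that] A B by (simp add: lin_superop_def)
  show "(\<lambda>i j. \<Sum>t\<in>T. c t * \<Phi> t (madd A (smul a B)) i j) =
        madd (\<lambda>i j. \<Sum>t\<in>T. c t * \<Phi> t A i j) (smul a (\<lambda>i j. \<Sum>t\<in>T. c t * \<Phi> t B i j))"
  proof (rule ext, rule ext)
    fix i j
    have "(\<Sum>t\<in>T. c t * \<Phi> t (madd A (smul a B)) i j) = (\<Sum>t\<in>T. c t * madd (\<Phi> t A) (smul a (\<Phi> t B)) i j)"
      by (rule sum.cong) (simp_all only: e)
    also have "\<dots> = (\<Sum>t\<in>T. c t * \<Phi> t A i j) + a * (\<Sum>t\<in>T. c t * \<Phi> t B i j)"
      by (simp add: madd_def smul_def sum.distrib sum_distrib_left algebra_simps)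
    finally show "(\<Sum>t\<in>T. c t * \<Phi> t (madd A (smul a B)) i j) =
        madd (\<lambda>i j. \<Sum>t\<in>T. c t * \<Phi> t A i j) (smul a (\<lambda>i j. \<Sum>t\<in>T. c t * \<Phi> t B i j)) i j"
      by (simp add: madd_def smul_def)
  qed
qed

lemma lin_id: "lin_superop d id"
  by (auto simp: lin_superop_def)

lemma lin_diff: "lin_superop d \<Phi> \<Longrightarrow> lin_superop d \<Psi> \<Longrightarrow> lin_superop d (superop_diff \<Phi> \<Psi>)"
  unfolding lin_superop_def superop_diff_def
  by (auto simp: mats_def madd_def smul_def algebra_simps intro!: ext)


lemma Ex_lc: "x < 2^n \<Longrightarrow> Ex x = lc (zidx n) (\<lambda>z. Zop n z x x / 2^n) (Zop n)"
proof (rule ext, rule ext)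
  fix r c assume x: "x < 2^n"
  have "lc (zidx n) (\<lambda>z. Zop n z x x / 2^n) (Zop n) r c = (\<Sum>z\<in>zidx n. Zop n z x x * Zop n z r c) / 2^n"
    by (simp add: lc_def sum_divide_distrib)
  also have "\<dots> = Ex x r c" using Ex_expand[OF x, of r c] by simp
  finally show "Ex x r c = lc (zidx n) (\<lambda>z. Zop n z x x / 2^n) (Zop n) r c" by simp
qed

lemma omega_adj_mats: "omega_adj D g A \<in> mats D"
  by (simp add: omega_adj_def)

lemma Sop_Y:
  assumes fin: "finite G" and cl: "\<forall>g\<in>G. clifford n g" and clg: "clifford n g" and z: "z \<in> zidx n"
  shows "Sop n G p (omega_adj (2^n) g (Zop n z)) = smul (complex_of_real (s1 n G p (Xi n z g))) (omega_adj (2^n) g (Zop n z))"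
proof -
  obtain e where e: "omega_adj (2^n) g (Zop n z) = smul e (pauli n (Xi n z g))" and xi: "Xi n z g \<in> pidx n"
    using Xi_prop[OF clg z] by blast
  show ?thesis unfolding e Sop_smul Sop_pauli[OF fin cl xi] smul_smul by (simp add: mult.commute)
qed

lemma Sinv_eq:
  assumes fin: "finite G" and cl: "\<forall>g\<in>G. clifford n g" and pn: "\<forall>g\<in>G. p g \<ge> 0"
    and S: "bij_betw (Sop n G p) (mats (2 ^ n)) (mats (2 ^ n))"
    and clg: "clifford n g" and x: "x < 2^n"
  shows "Sinv n G p (omega_adj (2^n) g (Ex x)) =
     lc (zidx n) (\<lambda>z. Zop n z x x / (2^n * complex_of_real (s1 n G p (Xi n z g)))) (\<lambda>z. omega_adj (2^n) g (Zop n z))"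
proof -
  let ?Y = "\<lambda>z. omega_adj (2^n) g (Zop n z)"
  let ?C = "lc (zidx n) (\<lambda>z. Zop n z x x / (2^n * complex_of_real (s1 n G p (Xi n z g)))) ?Y"
  have Cm: "?C \<in> mats (2^n)" by (intro lc_mats omega_adj_mats)
  have spos: "s1 n G p (Xi n z g) > 0" if "z \<in> zidx n" for z
    using s1_pos[OF fin cl pn S] Xi_prop[OF clg that] by blast
  have "Sop n G p ?C = lc (zidx n) (\<lambda>z. Zop n z x x / (2^n * complex_of_real (s1 n G p (Xi n z g)))) (\<lambda>z. Sop n G p (?Y z))"
    by (rule Sop_lc)
  also have "\<dots> = lc (zidx n) (\<lambda>z. Zop n z x x / 2^n) ?Y"
    unfolding lc_def
  proof (intro ext sum.cong refl)
    fix i j z assume z: "z \<in> zidx n"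
    have ne: "complex_of_real (s1 n G p (Xi n z g)) \<noteq> 0" using spos[OF z] by simp
    show "Zop n z x x / (2^n * complex_of_real (s1 n G p (Xi n z g))) * Sop n G p (?Y z) i j = Zop n z x x / 2^n * ?Y z i j"
      unfolding Sop_Y[OF fin cl clg z] using ne by (simp add: smul_def field_simps)
  qed
  also have "\<dots> = omega_adj (2^n) g (Ex x)" by (simp add: Ex_lc[OF x] omega_adj_lc)
  finally have "Sop n G p ?C = omega_adj (2^n) g (Ex x)" .
  moreover have "inj_on (Sop n G p) (mats (2^n))" using S by (simp add: bij_betw_def)
  ultimately show ?thesis unfolding Sinv_def using Cm by (simp add: inv_into_f_eq)
qed

lemma ohat_eq:
  assumes fin: "finite G" and cl: "\<forall>g\<in>G. clifford n g" and pn: "\<forall>g\<in>G. p g \<ge> 0"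
    and S: "bij_betw (Sop n G p) (mats (2 ^ n)) (mats (2 ^ n))"
    and clg: "clifford n g" and x: "x < 2^n"
  shows "ohat n G p Obs g x = (\<Sum>z\<in>zidx n. Zop n z x x * (hs (2^n) Obs (omega_adj (2^n) g (Zop n z)) / (2^n * complex_of_real (s1 n G p (Xi n z g)))))"
  unfolding ohat_def Sinv_eq[OF fin cl pn S clg x] hs_lc by (simp add: field_simps)

lemma diag_tr:
  assumes Z: "isdiag Z" "isdiag Z'"
  shows "tr D (mmul D (mmul D Z Z') M) = (\<Sum>x<D. Z x x * Z' x x * M x x)"
proof -
  have ZZ: "mmul D Z Z' x k = (if x = k \<and> x < D then Z x x * Z' x x else 0)" for x k
  proof (cases "x < D \<and> k < D")
    case True
    have "(\<Sum>l<D. Z x l * Z' l k) = (\<Sum>l<D. if l = x then Z x x * Z' x k else 0)"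
      by (rule sum.cong) (use Z(1) in \<open>auto simp: isdiag_def\<close>)
    also have "\<dots> = Z x x * Z' x k" using True by simp
    finally show ?thesis using True Z(2) by (auto simp: mmul_def isdiag_def)
  qed (auto simp: mmul_def)
  have "tr D (mmul D (mmul D Z Z') M) = (\<Sum>x<D. \<Sum>k<D. mmul D Z Z' x k * M k x)"
    by (simp add: tr_def mmul_def)
  also have "\<dots> = (\<Sum>x<D. \<Sum>k<D. if k = x then Z x x * Z' x x * M x x else 0)"
    by (intro sum.cong refl) (auto simp: ZZ)
  also have "\<dots> = (\<Sum>x<D. Z x x * Z' x x * M x x)" by simp
  finally show ?thesis .
qed

lemma conj_tr:
  assumes U: "unitary D g" and Am: "A \<in> mats D" and Bm: "B \<in> mats D"
  shows "tr D (mmul D (mmul D A B) (omega D g X)) = tr D (mmul D (mmul D (omega_adj D g A) (omega_adj D g B)) X)"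
proof -
  have gg: "mmul D g (adj g) = idm D" using U by (simp add: unitary_def)
  have "mmul D (omega_adj D g A) (omega_adj D g B) = mmul D (adj g) (mmul D (mmul D A B) g)"
  proof -
    have "mmul D (omega_adj D g A) (omega_adj D g B) = mmul D (adj g) (mmul D A (mmul D (mmul D g (adj g)) (mmul D B g)))"
      unfolding omega_adj_def by (simp add: mmul_assoc)
    also have "\<dots> = mmul D (adj g) (mmul D A (mmul D B g))" unfolding gg by (simp add: mmul_idm_left)
    finally show ?thesis by (simp add: mmul_assoc)
  qed
  then have "tr D (mmul D (mmul D (omega_adj D g A) (omega_adj D g B)) X) = tr D (mmul D (adj g) (mmul D (mmul D (mmul D A B) g) X))"
    by (simp add: mmul_assoc)
  also have "\<dots> = tr D (mmul D (mmul D (mmul D (mmul D A B) g) X) (adj g))" by (rule tr_cyclic)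
  also have "\<dots> = tr D (mmul D (mmul D A B) (omega D g X))" by (simp add: omega_def mmul_assoc)
  finally show ?thesis by simp
qed


definition Yz :: "nat \<Rightarrow> cmat \<Rightarrow> bool list \<Rightarrow> cmat" where
  "Yz n g z = omega_adj (2^n) g (Zop n z)"

definition Kc :: "nat \<Rightarrow> cmat set \<Rightarrow> (cmat \<Rightarrow> real) \<Rightarrow> cmat \<Rightarrow> cmat \<Rightarrow> bool list \<Rightarrow> complex" where
  "Kc n G p Obs g z = hs (2^n) Obs (Yz n g z) / (2^n * complex_of_real (s1 n G p (Xi n z g)))"

lemma sum_swap3: "(\<Sum>x\<in>A. \<Sum>z\<in>B. \<Sum>z'\<in>C. f x z z') = (\<Sum>z\<in>B. \<Sum>z'\<in>C. \<Sum>x\<in>A. f x z z')"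
proof -
  have "(\<Sum>x\<in>A. \<Sum>z\<in>B. \<Sum>z'\<in>C. f x z z') = (\<Sum>z\<in>B. \<Sum>x\<in>A. \<Sum>z'\<in>C. f x z z')" by (rule sum.swap)
  also have "\<dots> = (\<Sum>z\<in>B. \<Sum>z'\<in>C. \<Sum>x\<in>A. f x z z')" by (rule sum.cong[OF refl], rule sum.swap)
  finally show ?thesis .
qed

lemma moment_g:
  assumes fin: "finite G" and cl: "\<forall>g\<in>G. clifford n g" and pn: "\<forall>g\<in>G. p g \<ge> 0"
    and S: "bij_betw (Sop n G p) (mats (2 ^ n)) (mats (2 ^ n))"
    and clg: "clifford n g" and Xm: "X \<in> mats (2^n)"
  shows "(\<Sum>x<2^n. omega (2^n) g X x x * (ohat n G p Obs g x)\<^sup>2) =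
    (\<Sum>z\<in>zidx n. \<Sum>z'\<in>zidx n. Kc n G p Obs g z * Kc n G p Obs g z' * tr (2^n) (mmul (2^n) (mmul (2^n) (Yz n g z) (Yz n g z')) X))"
proof -
  let ?K = "Kc n G p Obs g" and ?D = "(2::nat)^n"
  have oh: "ohat n G p Obs g x = (\<Sum>z\<in>zidx n. Zop n z x x * ?K z)" if "x < ?D" for x
    unfolding ohat_eq[OF fin cl pn S clg that] Kc_def Yz_def ..
  have "(\<Sum>x<?D. omega ?D g X x x * (ohat n G p Obs g x)\<^sup>2) =
      (\<Sum>x<?D. \<Sum>z\<in>zidx n. \<Sum>z'\<in>zidx n. ?K z * ?K z' * (Zop n z x x * Zop n z' x x * omega ?D g X x x))"
  proof (rule sum.cong[OF refl])
    fix x assume "x \<in> {..<?D}"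
    then have "(ohat n G p Obs g x)\<^sup>2 = (\<Sum>z\<in>zidx n. Zop n z x x * ?K z) * (\<Sum>z'\<in>zidx n. Zop n z' x x * ?K z')"
      by (simp add: oh power2_eq_square)
    also have "\<dots> = (\<Sum>z\<in>zidx n. \<Sum>z'\<in>zidx n. (Zop n z x x * ?K z) * (Zop n z' x x * ?K z'))" by (rule sum_product)
    finally show "omega ?D g X x x * (ohat n G p Obs g x)\<^sup>2 =
        (\<Sum>z\<in>zidx n. \<Sum>z'\<in>zidx n. ?K z * ?K z' * (Zop n z x x * Zop n z' x x * omega ?D g X x x))"
      by (simp add: sum_distrib_left mult_ac)
  qed
  also have "\<dots> = (\<Sum>z\<in>zidx n. \<Sum>z'\<in>zidx n. \<Sum>x<?D. ?K z * ?K z' * (Zop n z x x * Zop n z' x x * omega ?D g X x x))"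
    by (rule sum_swap3)
  also have "\<dots> = (\<Sum>z\<in>zidx n. \<Sum>z'\<in>zidx n. ?K z * ?K z' * tr ?D (mmul ?D (mmul ?D (Yz n g z) (Yz n g z')) X))"
  proof (intro sum.cong refl)
    fix z z' assume z: "z \<in> zidx n" and z': "z' \<in> zidx n"
    have "(\<Sum>x<?D. Zop n z x x * Zop n z' x x * omega ?D g X x x) = tr ?D (mmul ?D (mmul ?D (Zop n z) (Zop n z')) (omega ?D g X))"
      using z z' by (simp add: diag_tr Zop_diag zidx_def)
    also have "\<dots> = tr ?D (mmul ?D (mmul ?D (Yz n g z) (Yz n g z')) X)"
      unfolding Yz_def by (rule conj_tr[OF clifford_unitary[OF clg] Zop_mats Zop_mats])
    finally show "(\<Sum>x<?D. ?K z * ?K z' * (Zop n z x x * Zop n z' x x * omega ?D g X x x)) =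
        ?K z * ?K z' * tr ?D (mmul ?D (mmul ?D (Yz n g z) (Yz n g z')) X)"
      by (simp add: sum_distrib_left[symmetric])
  qed
  finally show ?thesis .
qed


definition Fc :: "nat \<Rightarrow> cmat set \<Rightarrow> (cmat \<Rightarrow> real) \<Rightarrow> cmat \<Rightarrow> (bool \<times> bool) list \<Rightarrow> complex" where
  "Fc n G p Obs a = hs (2^n) Obs (pauli n a) / (2^n * complex_of_real (s1 n G p a))"

definition Tm :: "nat \<Rightarrow> (bool \<times> bool) list \<Rightarrow> (bool \<times> bool) list \<Rightarrow> cmat \<Rightarrow> complex" where
  "Tm n a a' X = tr (2^n) (mmul (2^n) (mmul (2^n) (pauli n a) (pauli n a')) X)"

lemma KKT:
  assumes clg: "clifford n g" and z: "z \<in> zidx n" and z': "z' \<in> zidx n"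
  shows "Kc n G p Obs g z * Kc n G p Obs g z' * tr (2^n) (mmul (2^n) (mmul (2^n) (Yz n g z) (Yz n g z')) X)
       = Fc n G p Obs (Xi n z g) * Fc n G p Obs (Xi n z' g) * Tm n (Xi n z g) (Xi n z' g) X"
proof -
  obtain e where e: "e \<in> {1, -1}" "Yz n g z = smul e (pauli n (Xi n z g))"
    using Xi_prop[OF clg z] unfolding Yz_def by blast
  obtain e' where e': "e' \<in> {1, -1}" "Yz n g z' = smul e' (pauli n (Xi n z' g))"
    using Xi_prop[OF clg z'] unfolding Yz_def by blast
  have K1: "Kc n G p Obs g z = e * Fc n G p Obs (Xi n z g)"
    unfolding Kc_def Fc_def e(2) hs_smul by simp
  have K2: "Kc n G p Obs g z' = e' * Fc n G p Obs (Xi n z' g)"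
    unfolding Kc_def Fc_def e'(2) hs_smul by simp
  have T: "tr (2^n) (mmul (2^n) (mmul (2^n) (Yz n g z) (Yz n g z')) X) = e * e' * Tm n (Xi n z g) (Xi n z' g) X"
    unfolding e(2) e'(2) Tm_def mmul_smul_left mmul_smul_right smul_smul tr_smul0 by (simp add: mult_ac)
  have ee: "e * e = 1" "e' * e' = 1" using e(1) e'(1) by auto
  have r: "e * x * (e' * y) * (e * e' * t) = (e * e) * (e' * e') * (x * y * t)" for x y t :: complex
    by (simp add: mult_ac)
  show ?thesis unfolding K1 K2 T r ee by simp
qed

lemma moment_formula:
  assumes fin: "finite G" and cl: "\<forall>g\<in>G. clifford n g" and pn: "\<forall>g\<in>G. p g \<ge> 0"
    and S: "bij_betw (Sop n G p) (mats (2 ^ n)) (mats (2 ^ n))"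
    and Lm: "\<forall>g\<in>G. \<Lambda> g \<rho> \<in> mats (2^n)"
  shows "second_moment n G p \<Lambda> Obs \<rho> = (\<Sum>g\<in>G. complex_of_real (p g) *
      (\<Sum>z\<in>zidx n. \<Sum>z'\<in>zidx n. Fc n G p Obs (Xi n z g) * Fc n G p Obs (Xi n z' g) * Tm n (Xi n z g) (Xi n z' g) (\<Lambda> g \<rho>)))"
  unfolding second_moment_def
proof (rule sum.cong[OF refl])
  fix g assume g: "g \<in> G"
  have clg: "clifford n g" using cl g by blast
  show "complex_of_real (p g) * (\<Sum>x<2 ^ n. omega (2 ^ n) g (\<Lambda> g \<rho>) x x * (ohat n G p Obs g x)\<^sup>2) =
        complex_of_real (p g) * (\<Sum>z\<in>zidx n. \<Sum>z'\<in>zidx n. Fc n G p Obs (Xi n z g) * Fc n G p Obs (Xi n z' g) * Tm n (Xi n z g) (Xi n z' g) (\<Lambda> g \<rho>))"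
    unfolding moment_g[OF fin cl pn S clg Lm[rule_format, OF g]]
    by (simp add: KKT[OF clg])
qed

lemma regroup:
  assumes fin: "finite G" and xi: "\<And>g z. g \<in> G \<Longrightarrow> z \<in> zidx n \<Longrightarrow> Xi n z g \<in> pidx n"
  shows "(\<Sum>g\<in>G. \<Sum>z\<in>zidx n. \<Sum>z'\<in>zidx n. f g (Xi n z g) (Xi n z' g)) =
         (\<Sum>a\<in>pidx n. \<Sum>a'\<in>pidx n. \<Sum>z\<in>zidx n. \<Sum>z'\<in>zidx n. \<Sum>g\<in>{g\<in>G. Xi n z g = a \<and> Xi n z' g = a'}. f g a a')"
proof -
  have "(\<Sum>g\<in>G. \<Sum>z\<in>zidx n. \<Sum>z'\<in>zidx n. f g (Xi n z g) (Xi n z' g)) =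
        (\<Sum>z\<in>zidx n. \<Sum>z'\<in>zidx n. \<Sum>g\<in>G. f g (Xi n z g) (Xi n z' g))" by (rule sum_swap3)
  also have "\<dots> = (\<Sum>z\<in>zidx n. \<Sum>z'\<in>zidx n. \<Sum>a\<in>pidx n. \<Sum>a'\<in>pidx n. \<Sum>g\<in>{g\<in>G. Xi n z g = a \<and> Xi n z' g = a'}. f g a a')"
  proof (intro sum.cong refl)
    fix z z' assume z: "z \<in> zidx n" and z': "z' \<in> zidx n"
    have "(\<Sum>g\<in>G. f g (Xi n z g) (Xi n z' g)) =
          (\<Sum>y\<in>pidx n \<times> pidx n. \<Sum>g\<in>{g. g \<in> G \<and> (Xi n z g, Xi n z' g) = y}. f g (Xi n z g) (Xi n z' g))"
      by (rule sum.group[symmetric]) (use fin finite_pidx xi z z' in auto)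
    also have "\<dots> = (\<Sum>(a, a')\<in>pidx n \<times> pidx n. \<Sum>g\<in>{g\<in>G. Xi n z g = a \<and> Xi n z' g = a'}. f g a a')"
      by (intro sum.cong refl) auto
    also have "\<dots> = (\<Sum>a\<in>pidx n. \<Sum>a'\<in>pidx n. \<Sum>g\<in>{g\<in>G. Xi n z g = a \<and> Xi n z' g = a'}. f g a a')"
      by (rule sum.cartesian_product[symmetric])
    finally show "(\<Sum>g\<in>G. f g (Xi n z g) (Xi n z' g)) = \<dots>" .
  qed
  also have "\<dots> = (\<Sum>a\<in>pidx n. \<Sum>a'\<in>pidx n. \<Sum>z\<in>zidx n. \<Sum>z'\<in>zidx n. \<Sum>g\<in>{g\<in>G. Xi n z g = a \<and> Xi n z' g = a'}. f g a a')"
  proof -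
    have "(\<Sum>z\<in>zidx n. \<Sum>z'\<in>zidx n. \<Sum>a\<in>pidx n. \<Sum>a'\<in>pidx n. \<Sum>g\<in>{g\<in>G. Xi n z g = a \<and> Xi n z' g = a'}. f g a a') =
          (\<Sum>a\<in>pidx n. \<Sum>z\<in>zidx n. \<Sum>z'\<in>zidx n. \<Sum>a'\<in>pidx n. \<Sum>g\<in>{g\<in>G. Xi n z g = a \<and> Xi n z' g = a'}. f g a a')"
      by (rule sum_swap3[symmetric])
    also have "\<dots> = (\<Sum>a\<in>pidx n. \<Sum>a'\<in>pidx n. \<Sum>z\<in>zidx n. \<Sum>z'\<in>zidx n. \<Sum>g\<in>{g\<in>G. Xi n z g = a \<and> Xi n z' g = a'}. f g a a')"
      by (intro sum.cong refl sum_swap3[symmetric])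
    finally show ?thesis .
  qed
  finally show ?thesis .
qed


definition mcnt :: "nat \<Rightarrow> (bool \<times> bool) list \<Rightarrow> (bool \<times> bool) list \<Rightarrow> cmat \<Rightarrow> real" where
  "mcnt n a a' g = (\<Sum>z\<in>zidx n. \<Sum>z'\<in>zidx n. if Xi n z g = a \<and> Xi n z' g = a' then 1 else 0)"

lemma mcnt_nonneg: "mcnt n a a' g \<ge> 0"
  unfolding mcnt_def by (intro sum_nonneg) auto

lemma nested_count:
  fixes f :: "cmat \<Rightarrow> 'b::comm_ring_1"
  assumes fin: "finite G"
  shows "(\<Sum>z\<in>zidx n. \<Sum>z'\<in>zidx n. \<Sum>g\<in>{g\<in>G. Xi n z g = a \<and> Xi n z' g = a'}. f g) =
         (\<Sum>g\<in>G. (\<Sum>z\<in>zidx n. \<Sum>z'\<in>zidx n. if Xi n z g = a \<and> Xi n z' g = a' then 1 else 0) * f g)"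
proof -
  have "(\<Sum>z\<in>zidx n. \<Sum>z'\<in>zidx n. \<Sum>g\<in>{g\<in>G. Xi n z g = a \<and> Xi n z' g = a'}. f g) =
        (\<Sum>z\<in>zidx n. \<Sum>z'\<in>zidx n. \<Sum>g\<in>G. if Xi n z g = a \<and> Xi n z' g = a' then f g else 0)"
    using fin by (simp add: sum.inter_filter)
  also have "\<dots> = (\<Sum>g\<in>G. \<Sum>z\<in>zidx n. \<Sum>z'\<in>zidx n. if Xi n z g = a \<and> Xi n z' g = a' then f g else 0)"
    by (rule sum_swap3[symmetric])
  also have "\<dots> = (\<Sum>g\<in>G. (\<Sum>z\<in>zidx n. \<Sum>z'\<in>zidx n. if Xi n z g = a \<and> Xi n z' g = a' then 1 else 0) * f g)"
    by (simp add: sum_distrib_right if_distrib[of "\<lambda>x. x * _"] cong: if_cong)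
  finally show ?thesis .
qed

lemma cnt_complex: "(\<Sum>z\<in>zidx n. \<Sum>z'\<in>zidx n. if Xi n z g = a \<and> Xi n z' g = a' then 1 else (0::complex)) = complex_of_real (mcnt n a a' g)"
  unfolding mcnt_def of_real_sum by (intro sum.cong refl) simp

lemma r2_eq: "finite G \<Longrightarrow> r2 n G p a a' = (\<Sum>g\<in>G. mcnt n a a' g * p g)"
  unfolding r2_def mcnt_def by (rule nested_count)

lemma Lbar_wsum:
  assumes fin: "finite G" and r: "r2 n G p a a' \<noteq> 0" and pc: "pcommute n a a'"
  shows "Lbar n G p \<Lambda> a a' = (\<lambda>A i j. \<Sum>g\<in>G. complex_of_real (mcnt n a a' g * p g / r2 n G p a a') * \<Lambda> g A i j)"
proof (intro ext)
  fix A i j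
  have "Lbar n G p \<Lambda> a a' A i j = complex_of_real (1 / r2 n G p a a') *
       (\<Sum>g\<in>G. (\<Sum>z\<in>zidx n. \<Sum>z'\<in>zidx n. if Xi n z g = a \<and> Xi n z' g = a' then 1 else 0) * (complex_of_real (p g) * \<Lambda> g A i j))"
    using r pc by (simp add: Lbar_def nested_count[OF fin])
  also have "\<dots> = (\<Sum>g\<in>G. complex_of_real (1 / r2 n G p a a') * (complex_of_real (mcnt n a a' g) * (complex_of_real (p g) * \<Lambda> g A i j)))"
    by (simp add: sum_distrib_left cnt_complex)
  also have "\<dots> = (\<Sum>g\<in>G. complex_of_real (mcnt n a a' g * p g / r2 n G p a a') * \<Lambda> g A i j)"
    by (intro sum.cong refl) (simp add: divide_inverse mult_ac)
  finally show "Lbar n G p \<Lambda> a a' A i j = (\<Sum>g\<in>G. complex_of_real (mcnt n a a' g * p g / r2 n G p a a') * \<Lambda> g A i j)" .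
qed

lemma weights_sum:
  assumes fin: "finite G" and r: "r2 n G p a a' \<noteq> 0"
  shows "(\<Sum>g\<in>G. mcnt n a a' g * p g / r2 n G p a a') = 1"
  using r by (simp add: sum_divide_distrib[symmetric] r2_eq[OF fin])

lemma r2_nonneg: "\<forall>g\<in>G. p g \<ge> 0 \<Longrightarrow> r2 n G p a a' \<ge> 0"
  unfolding r2_def by (intro sum_nonneg) auto

lemma wsum_diff: "(\<Sum>g\<in>G. c g) * x - (\<Sum>g\<in>G. c g * y g) = (\<Sum>g\<in>G. c g * (x - y g))" for x :: complex
  by (simp add: sum_distrib_right sum_distrib_left right_diff_distrib sum_subtractf mult.commute)

lemma Lbar_diff_wsum:
  assumes fin: "finite G" and r: "r2 n G p a a' \<noteq> 0" and pc: "pcommute n a a'"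
  shows "superop_diff id (Lbar n G p \<Lambda> a a') =
     (\<lambda>A i j. \<Sum>g\<in>G. complex_of_real (mcnt n a a' g * p g / r2 n G p a a') * superop_diff id (\<Lambda> g) A i j)"
proof (intro ext)
  fix A i j
  let ?w = "\<lambda>g. mcnt n a a' g * p g / r2 n G p a a'"
  have ws: "(\<Sum>g\<in>G. complex_of_real (?w g)) = 1"
    using weights_sum[OF fin r] by (metis of_real_1 of_real_sum)
  have "superop_diff id (Lbar n G p \<Lambda> a a') A i j = A i j - (\<Sum>g\<in>G. complex_of_real (?w g) * \<Lambda> g A i j)"
    by (simp add: superop_diff_def Lbar_wsum[OF fin r pc])
  also have "\<dots> = (\<Sum>g\<in>G. complex_of_real (?w g)) * A i j - (\<Sum>g\<in>G. complex_of_real (?w g) * \<Lambda> g A i j)"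
    unfolding ws by simp
  also have "\<dots> = (\<Sum>g\<in>G. complex_of_real (?w g) * (A i j - \<Lambda> g A i j))"
    by (rule wsum_diff)
  also have "\<dots> = (\<Sum>g\<in>G. complex_of_real (?w g) * superop_diff id (\<Lambda> g) A i j)"
    by (simp add: superop_diff_def)
  finally show "superop_diff id (Lbar n G p \<Lambda> a a') A i j = (\<Sum>g\<in>G. complex_of_real (?w g) * superop_diff id (\<Lambda> g) A i j)" .
qed

lemma channel_lin: "quantum_channel d \<Phi> \<Longrightarrow> lin_superop d \<Phi>"
  by (simp add: quantum_channel_def)

lemma Lbar_diff_lin:
  assumes fin: "finite G" and ch: "\<forall>g\<in>G. quantum_channel (2^n) (\<Lambda> g)"
    and r: "r2 n G p a a' \<noteq> 0" and pc: "pcommute n a a'"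
  shows "lin_superop (2^n) (superop_diff id (Lbar n G p \<Lambda> a a'))"
  unfolding Lbar_diff_wsum[OF fin r pc]
  by (rule lin_wsum) (use ch in \<open>auto intro: lin_diff lin_id channel_lin\<close>)

lemma diamond_superop_zero: "diamond d (\<lambda>A i j. 0) = 0"
proof -
  have "diamond d (\<lambda>A i j. 0) \<le> 0"
  proof (rule diamond_least)
    fix X
    have "tens_id d d (\<lambda>A i j. 0) X = (\<lambda>i j. 0)" by (auto simp: tens_id_def intro!: ext)
    then show "tnorm (d * d) (tens_id d d (\<lambda>A i j. 0) X) \<le> 0" by (simp add: tnorm_zero)
  qed
  moreover have "lin_superop d (\<lambda>A i j. 0)" by (auto simp: lin_superop_def mats_def madd_def smul_def intro!: ext)
  ultimately show ?thesis using diamond_nonneg by (meson order.antisym)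
qed

lemma Lbar_diamond_le:
  assumes fin: "finite G" and ch: "\<forall>g\<in>G. quantum_channel (2^n) (\<Lambda> g)" and pn: "\<forall>g\<in>G. p g \<ge> 0"
    and ne: "G \<noteq> {}"
  shows "diamond (2^n) (superop_diff id (Lbar n G p \<Lambda> a a')) \<le> Max ((\<lambda>g. diamond (2 ^ n) (superop_diff id (\<Lambda> g))) ` G)"
proof -
  let ?M = "Max ((\<lambda>g. diamond (2 ^ n) (superop_diff id (\<Lambda> g))) ` G)"
  have le: "diamond (2 ^ n) (superop_diff id (\<Lambda> g)) \<le> ?M" if "g \<in> G" for g
    using fin that by (intro Max_ge) auto
  have linG: "lin_superop (2^n) (superop_diff id (\<Lambda> g))" if "g \<in> G" for g
    using ch that by (auto intro: lin_diff lin_id channel_lin)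
  obtain g0 where g0: "g0 \<in> G" using ne by blast
  have M0: "0 \<le> ?M" using diamond_nonneg[OF linG[OF g0]] le[OF g0] by linarith
  show ?thesis
  proof (cases "r2 n G p a a' = 0 \<or> \<not> pcommute n a a'")
    case True
    then have "Lbar n G p \<Lambda> a a' = id" by (auto simp: Lbar_def)
    moreover have "superop_diff id id = (\<lambda>A i j. 0)" by (auto simp: superop_diff_def intro!: ext)
    ultimately show ?thesis using M0 diamond_superop_zero by simp
  next
    case False
    then have r: "r2 n G p a a' \<noteq> 0" and pc: "pcommute n a a'" by auto
    let ?w = "\<lambda>g. mcnt n a a' g * p g / r2 n G p a a'"
    have w0: "?w g \<ge> 0" if "g \<in> G" for g
      using that pn mcnt_nonneg r2_nonneg[OF pn] by (intro divide_nonneg_nonneg mult_nonneg_nonneg) auto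
    have "diamond (2^n) (superop_diff id (Lbar n G p \<Lambda> a a')) \<le> (\<Sum>g\<in>G. ?w g * diamond (2^n) (superop_diff id (\<Lambda> g)))"
      unfolding Lbar_diff_wsum[OF fin r pc] by (rule diamond_conv[OF fin w0 linG])
    also have "\<dots> \<le> (\<Sum>g\<in>G. ?w g * ?M)" using w0 le by (intro sum_mono mult_left_mono) auto
    also have "\<dots> = (\<Sum>g\<in>G. ?w g) * ?M" by (rule sum_distrib_right[symmetric])
    also have "\<dots> = ?M" using weights_sum[OF fin r] by simp
    finally show ?thesis .
  qed
qed


lemma diag_mmul: "isdiag Z \<Longrightarrow> isdiag Z' \<Longrightarrow> mmul D Z Z' x k = (if x = k \<and> x < D then Z x x * Z' x x else 0)"
proof (cases "x < D \<and> k < D")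
  case True
  assume Z: "isdiag Z" "isdiag Z'"
  have "(\<Sum>l<D. Z x l * Z' l k) = (\<Sum>l<D. if l = x then Z x x * Z' x k else 0)"
    by (rule sum.cong) (use Z(1) in \<open>auto simp: isdiag_def\<close>)
  also have "\<dots> = Z x x * Z' x k" using True by simp
  finally show ?thesis using True Z(2) by (auto simp: mmul_def isdiag_def)
qed (auto simp: mmul_def)

lemma diag_comm: "isdiag Z \<Longrightarrow> isdiag Z' \<Longrightarrow> mmul D Z Z' = mmul D Z' Z"
  by (intro ext) (simp add: diag_mmul mult.commute)

lemma omega_adj_mmul:
  assumes U: "unitary D g" and Bm: "B \<in> mats D"
  shows "mmul D (omega_adj D g A) (omega_adj D g B) = omega_adj D g (mmul D A B)"
proof -
  have gg: "mmul D g (adj g) = idm D" using U by (simp add: unitary_def)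
  have "mmul D (omega_adj D g A) (omega_adj D g B) = mmul D (adj g) (mmul D A (mmul D (mmul D g (adj g)) (mmul D B g)))"
    unfolding omega_adj_def by (simp add: mmul_assoc)
  also have "\<dots> = mmul D (adj g) (mmul D A (mmul D B g))" unfolding gg by (simp add: mmul_idm_left)
  finally show ?thesis by (simp add: omega_adj_def mmul_assoc)
qed

lemma r2_witness:
  assumes "r2 n G p a a' \<noteq> 0"
  shows "\<exists>z\<in>zidx n. \<exists>z'\<in>zidx n. \<exists>g\<in>G. Xi n z g = a \<and> Xi n z' g = a'"
proof (rule ccontr)
  assume "\<not> ?thesis"
  then have e: "\<And>z z'. z \<in> zidx n \<Longrightarrow> z' \<in> zidx n \<Longrightarrow> {g\<in>G. Xi n z g = a \<and> Xi n z' g = a'} = {}" by blast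
  have "r2 n G p a a' = 0" unfolding r2_def by (intro sum.neutral ballI) (simp add: e)
  with assms show False by simp
qed

lemma pcomm_of_r2:
  assumes cl: "\<forall>g\<in>G. clifford n g" and r: "r2 n G p a a' \<noteq> 0"
  shows "pcommute n a a'"
proof -
  obtain z z' g where z: "z \<in> zidx n" and z': "z' \<in> zidx n" and g: "g \<in> G" and xa: "Xi n z g = a" and xa': "Xi n z' g = a'"
    using r2_witness[OF r] by blast
  have clg: "clifford n g" using cl g by blast
  have U: "unitary (2^n) g" using clg by (rule clifford_unitary)
  obtain e where e: "e \<in> {1, -1}" "Yz n g z = smul e (pauli n a)"
    using Xi_prop[OF clg z] xa unfolding Yz_def by blast
  obtain e' where e': "e' \<in> {1, -1}" "Yz n g z' = smul e' (pauli n a')"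
    using Xi_prop[OF clg z'] xa' unfolding Yz_def by blast
  have "mmul (2^n) (Yz n g z) (Yz n g z') = omega_adj (2^n) g (mmul (2^n) (Zop n z) (Zop n z'))"
    unfolding Yz_def by (rule omega_adj_mmul[OF U Zop_mats])
  also have "\<dots> = omega_adj (2^n) g (mmul (2^n) (Zop n z') (Zop n z))"
    using z z' by (simp add: diag_comm Zop_diag zidx_def)
  also have "\<dots> = mmul (2^n) (Yz n g z') (Yz n g z)"
    unfolding Yz_def by (rule omega_adj_mmul[OF U Zop_mats, symmetric])
  finally have "smul (e * e') (mmul (2^n) (pauli n a) (pauli n a')) = smul (e * e') (mmul (2^n) (pauli n a') (pauli n a))"
    unfolding e(2) e'(2) mmul_smul_left mmul_smul_right smul_smul by (simp add: mult.commute)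
  then have "smul (e * e') (smul (e * e') (mmul (2^n) (pauli n a) (pauli n a'))) = smul (e * e') (smul (e * e') (mmul (2^n) (pauli n a') (pauli n a)))"
    by simp
  moreover have "(e * e') * (e * e') = 1" using e(1) e'(1) by auto
  ultimately show ?thesis unfolding pcommute_def smul_smul by simp
qed

lemma Tm_diff: "Tm n a a' (\<lambda>i j. A i j - B i j) = Tm n a a' A - Tm n a a' B"
  unfolding Tm_def tr_def mmul_def by (simp add: sum_subtractf right_diff_distrib)

lemma Tm_lc: "Tm n a a' (lc S c Y) = (\<Sum>k\<in>S. c k * Tm n a a' (Y k))"
  unfolding Tm_def mmul_lc_right tr_lc ..

lemma Tm_same: "a \<in> pidx n \<Longrightarrow> X \<in> mats (2^n) \<Longrightarrow> Tm n a a X = tr (2^n) X"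
  unfolding Tm_def by (simp add: pauli_sq pidx_def mmul_idm_left)

lemma Tm_hs: "Tm n a a' X = hs (2^n) (adj (mmul (2^n) (pauli n a) (pauli n a'))) X"
  by (simp add: Tm_def hs_adj_tr)

definition Qv :: "nat \<Rightarrow> cmat set \<Rightarrow> (cmat \<Rightarrow> real) \<Rightarrow> (cmat \<Rightarrow> superop) \<Rightarrow> cmat \<Rightarrow> (bool \<times> bool) list \<Rightarrow> (bool \<times> bool) list \<Rightarrow> complex" where
  "Qv n G p \<Lambda> \<rho> a a' = (\<Sum>z\<in>zidx n. \<Sum>z'\<in>zidx n. \<Sum>g\<in>{g\<in>G. Xi n z g = a \<and> Xi n z' g = a'}.
       complex_of_real (p g) * (Tm n a a' (\<Lambda> g \<rho>) - Tm n a a' \<rho>))"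

lemma Qv_as_G: "finite G \<Longrightarrow> Qv n G p \<Lambda> \<rho> a a' = (\<Sum>g\<in>G. complex_of_real (mcnt n a a' g * p g) * (Tm n a a' (\<Lambda> g \<rho>) - Tm n a a' \<rho>))"
  unfolding Qv_def by (simp add: nested_count cnt_complex mult_ac)

lemma Qv_same:
  assumes fin: "finite G" and ch: "\<forall>g\<in>G. quantum_channel (2^n) (\<Lambda> g)" and a: "a \<in> pidx n" and Rm: "\<rho> \<in> mats (2^n)"
  shows "Qv n G p \<Lambda> \<rho> a a = 0"
proof -
  have "Tm n a a (\<Lambda> g \<rho>) - Tm n a a \<rho> = 0" if g: "g \<in> G" for g
  proof -
    have q: "quantum_channel (2^n) (\<Lambda> g)" using ch g by blast
    have "\<Lambda> g \<rho> \<in> mats (2^n)" using q Rm by (simp add: quantum_channel_def lin_superop_def)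
    moreover have "tr (2^n) (\<Lambda> g \<rho>) = tr (2^n) \<rho>" using q Rm by (simp add: quantum_channel_def trace_preserving_def)
    ultimately show ?thesis using Tm_same[OF a] Rm by simp
  qed
  then show ?thesis unfolding Qv_as_G[OF fin] by simp
qed

lemma Qv_r2zero:
  assumes fin: "finite G" and pn: "\<forall>g\<in>G. p g \<ge> 0" and r: "r2 n G p a a' = 0"
  shows "Qv n G p \<Lambda> \<rho> a a' = 0"
proof -
  have "(\<Sum>g\<in>G. mcnt n a a' g * p g) = 0" using r r2_eq[OF fin] by simp
  then have z: "\<forall>g\<in>G. mcnt n a a' g * p g = 0"
    using fin pn mcnt_nonneg by (subst (asm) sum_nonneg_eq_0_iff) auto
  show ?thesis unfolding Qv_as_G[OF fin]
  proof (intro sum.neutral ballI)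
    fix g assume "g \<in> G"
    then have "mcnt n a a' g * p g = 0" using z by blast
    then show "complex_of_real (mcnt n a a' g * p g) * (Tm n a a' (\<Lambda> g \<rho>) - Tm n a a' \<rho>) = 0" by simp
  qed
qed

lemma abs_step: "H = Tr - (\<Sum>g\<in>G. c g * t g) \<Longrightarrow> - R * H = (\<Sum>g\<in>G. (R * c g) * t g) - R * Tr" for H Tr R :: complex
proof -
  assume h: "H = Tr - (\<Sum>g\<in>G. c g * t g)"
  have "(\<Sum>g\<in>G. (R * c g) * t g) = R * (\<Sum>g\<in>G. c g * t g)" by (simp add: sum_distrib_left mult.assoc)
  then show ?thesis unfolding h by (simp add: algebra_simps)
qed

lemma abs_step2: "(\<Sum>g\<in>G. c g * t g) - (\<Sum>g\<in>G. c g) * x = (\<Sum>g\<in>G. c g * (t g - x))" for x :: complex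
proof -
  have "(\<Sum>g\<in>G. c g) * x = (\<Sum>g\<in>G. c g * x)" by (rule sum_distrib_right)
  then show ?thesis by (simp add: right_diff_distrib sum_subtractf)
qed

lemma Qv_main:
  assumes fin: "finite G" and cl: "\<forall>g\<in>G. clifford n g" and r: "r2 n G p a a' \<noteq> 0"
  shows "Qv n G p \<Lambda> \<rho> a a' = - complex_of_real (r2 n G p a a') *
           hs (2^n) (adj (mmul (2^n) (pauli n a) (pauli n a'))) (superop_diff id (Lbar n G p \<Lambda> a a') \<rho>)"
proof -
  have pc: "pcommute n a a'" by (rule pcomm_of_r2[OF cl r])
  let ?r = "r2 n G p a a'" and ?T = "Tm n a a'"
  let ?w = "\<lambda>g. mcnt n a a' g * p g / ?r"
  have L: "Lbar n G p \<Lambda> a a' \<rho> = lc G (\<lambda>g. complex_of_real (?w g)) (\<lambda>g. \<Lambda> g \<rho>)"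
    unfolding Lbar_wsum[OF fin r pc] lc_def ..
  have "hs (2^n) (adj (mmul (2^n) (pauli n a) (pauli n a'))) (superop_diff id (Lbar n G p \<Lambda> a a') \<rho>)
        = ?T \<rho> - (\<Sum>g\<in>G. complex_of_real (?w g) * ?T (\<Lambda> g \<rho>))"
    unfolding Tm_hs[symmetric] superop_diff_def id_def Tm_diff L Tm_lc ..
  then have "- complex_of_real ?r * hs (2^n) (adj (mmul (2^n) (pauli n a) (pauli n a'))) (superop_diff id (Lbar n G p \<Lambda> a a') \<rho>)
        = (\<Sum>g\<in>G. (complex_of_real ?r * complex_of_real (?w g)) * ?T (\<Lambda> g \<rho>)) - complex_of_real ?r * ?T \<rho>"
    by (rule abs_step)
  also have "\<dots> = (\<Sum>g\<in>G. complex_of_real (mcnt n a a' g * p g) * ?T (\<Lambda> g \<rho>)) - complex_of_real (\<Sum>g\<in>G. mcnt n a a' g * p g) * ?T \<rho>"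
  proof -
    have "?r * ?w g = mcnt n a a' g * p g" for g using r by simp
    then have "complex_of_real ?r * complex_of_real (?w g) = complex_of_real (mcnt n a a' g * p g)" for g
      by (metis of_real_mult)
    then show ?thesis by (simp add: r2_eq[OF fin, symmetric])
  qed
  also have "\<dots> = Qv n G p \<Lambda> \<rho> a a'"
    unfolding Qv_as_G[OF fin] of_real_sum by (rule abs_step2)
  finally show ?thesis by simp
qed


lemma Lbar_diamond_nonneg:
  assumes fin: "finite G" and ch: "\<forall>g\<in>G. quantum_channel (2^n) (\<Lambda> g)" and cl: "\<forall>g\<in>G. clifford n g"
  shows "diamond (2^n) (superop_diff id (Lbar n G p \<Lambda> a a')) \<ge> 0"
proof (cases "r2 n G p a a' = 0 \<or> \<not> pcommute n a a'")
  case True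
  then have "Lbar n G p \<Lambda> a a' = id" by (auto simp: Lbar_def)
  moreover have "superop_diff id id = (\<lambda>A i j. 0)" by (auto simp: superop_diff_def intro!: ext)
  ultimately show ?thesis using diamond_superop_zero by simp
next
  case False
  then show ?thesis using Lbar_diff_lin[OF fin ch] diamond_nonneg by blast
qed

lemma adjM_facts:
  assumes a: "a \<in> pidx n" and a': "a' \<in> pidx n"
  shows "adj (mmul (2^n) (pauli n a) (pauli n a')) \<in> mats (2^n)"
    and "opnorm (2^n) (adj (mmul (2^n) (pauli n a) (pauli n a'))) \<le> 1"
proof -
  have U: "unitary (2^n) (adj (mmul (2^n) (pauli n a) (pauli n a')))"
    using a a' by (intro unitary_adj unitary_mmul pauli_unitary) (auto simp: pidx_def)
  then show "adj (mmul (2^n) (pauli n a) (pauli n a')) \<in> mats (2^n)" by (simp add: unitary_def)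
  show "opnorm (2^n) (adj (mmul (2^n) (pauli n a) (pauli n a'))) \<le> 1" using U by (rule unitary_opnorm)
qed

lemma cmod_Fc:
  assumes "s1 n G p a > 0"
  shows "cmod (Fc n G p Obs a) = cmod (hs (2^n) Obs (pauli n a)) / (2^n * s1 n G p a)"
  using assms by (simp add: Fc_def norm_divide norm_mult norm_power)

lemma beta_abs: "\<bar>beta_sign n a a'\<bar> = 1"
  by (simp add: beta_sign_def)


lemma term_bound:
  assumes fin: "finite G" and cl: "\<forall>g\<in>G. clifford n g" and pn: "\<forall>g\<in>G. p g \<ge> 0"
    and S: "bij_betw (Sop n G p) (mats (2 ^ n)) (mats (2 ^ n))"
    and ch: "\<forall>g\<in>G. quantum_channel (2 ^ n) (\<Lambda> g)"
    and R: "psd (2^n) \<rho>" and trR: "tr (2^n) \<rho> = 1"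
    and C0: "0 \<le> C"
    and Cb: "\<forall>a\<in>pidx n. \<forall>a'\<in>pidx n. a \<noteq> a' \<and> hs (2 ^ n) Obs (pauli n a) \<noteq> 0
                     \<and> hs (2 ^ n) Obs (pauli n a') \<noteq> 0
                  \<longrightarrow> \<bar>s2 n G p a a'\<bar> / (s1 n G p a * s1 n G p a') \<le> C"
    and a: "a \<in> pidx n" and a': "a' \<in> pidx n"
    and Dm: "diamond (2^n) (superop_diff id (Lbar n G p \<Lambda> a a')) \<le> Dmax" and D0: "0 \<le> Dmax"
  shows "cmod (Fc n G p Obs a * Fc n G p Obs a' * Qv n G p \<Lambda> \<rho> a a') \<le>
         cmod (hs (2^n) Obs (pauli n a)) * cmod (hs (2^n) Obs (pauli n a')) / (2^n)\<^sup>2 * (C * Dmax)"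
proof -
  let ?ha = "cmod (hs (2^n) Obs (pauli n a))" and ?hb = "cmod (hs (2^n) Obs (pauli n a'))"
  let ?RHS = "?ha * ?hb / (2^n)\<^sup>2 * (C * Dmax)"
  have R0: "0 \<le> ?RHS" using C0 D0 by simp
  have Rm: "\<rho> \<in> mats (2^n)" using R by (simp add: psd_def)
  show ?thesis
  proof (cases "a = a' \<or> hs (2 ^ n) Obs (pauli n a) = 0 \<or> hs (2 ^ n) Obs (pauli n a') = 0 \<or> r2 n G p a a' = 0")
    case True
    note T = True
    have "Fc n G p Obs a * Fc n G p Obs a' * Qv n G p \<Lambda> \<rho> a a' = 0"
    proof (cases "a = a'")
      case True then show ?thesis using Qv_same[OF fin ch a Rm] by simp
    next
      case False
      then have "hs (2 ^ n) Obs (pauli n a) = 0 \<or> hs (2 ^ n) Obs (pauli n a') = 0 \<or> r2 n G p a a' = 0"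
        using T False by blast
      then show ?thesis using Qv_r2zero[OF fin pn] by (auto simp: Fc_def)
    qed
    then show ?thesis using R0 by (simp only: norm_zero)
  next
    case False
    then have ne: "a \<noteq> a'" and h1: "hs (2 ^ n) Obs (pauli n a) \<noteq> 0" and h2: "hs (2 ^ n) Obs (pauli n a') \<noteq> 0"
      and r: "r2 n G p a a' \<noteq> 0" by auto
    have sa: "s1 n G p a > 0" and sb: "s1 n G p a' > 0" using s1_pos[OF fin cl pn S] a a' by auto
    have r0: "r2 n G p a a' \<ge> 0" using r2_nonneg[OF pn] by blast
    have pc: "pcommute n a a'" by (rule pcomm_of_r2[OF cl r])
    let ?M = "adj (mmul (2^n) (pauli n a) (pauli n a'))"
    let ?Psi = "superop_diff id (Lbar n G p \<Lambda> a a')"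
    let ?H = "hs (2^n) ?M (?Psi \<rho>)"
    have lin: "lin_superop (2^n) ?Psi" by (rule Lbar_diff_lin[OF fin ch r pc])
    have d1: "(1::nat) \<le> 2^n" by simp
    have H: "cmod ?H \<le> Dmax"
      using diamond_state[OF lin R trR adjM_facts[OF a a'] d1] Dm by linarith
    have Q: "cmod (Qv n G p \<Lambda> \<rho> a a') = r2 n G p a a' * cmod ?H"
      unfolding Qv_main[OF fin cl r] using r0 by (simp add: norm_mult)
    have Cq: "r2 n G p a a' / (s1 n G p a * s1 n G p a') \<le> C"
    proof -
      have "\<bar>s2 n G p a a'\<bar> = r2 n G p a a'" using r0 by (simp add: s2_def abs_mult beta_abs)
      moreover have "\<bar>s2 n G p a a'\<bar> / (s1 n G p a * s1 n G p a') \<le> C" using Cb a a' ne h1 h2 by blast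
      ultimately show ?thesis by simp
    qed
    have "cmod (Fc n G p Obs a * Fc n G p Obs a' * Qv n G p \<Lambda> \<rho> a a') =
          ?ha * ?hb / (2^n)\<^sup>2 * ((r2 n G p a a' / (s1 n G p a * s1 n G p a')) * cmod ?H)"
      using sa sb unfolding norm_mult cmod_Fc[OF sa] cmod_Fc[OF sb] Q by (simp add: field_simps power2_eq_square)
    also have "\<dots> \<le> ?ha * ?hb / (2^n)\<^sup>2 * (C * Dmax)"
      using Cq H sa sb r0 C0 by (intro mult_left_mono mult_mono) auto
    finally show ?thesis .
  qed
qed


lemma diff_formula:
  assumes fin: "finite G" and cl: "\<forall>g\<in>G. clifford n g" and pn: "\<forall>g\<in>G. p g \<ge> 0"
    and S: "bij_betw (Sop n G p) (mats (2 ^ n)) (mats (2 ^ n))"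
    and ch: "\<forall>g\<in>G. quantum_channel (2 ^ n) (\<Lambda> g)" and Rm: "\<rho> \<in> mats (2^n)"
  shows "second_moment n G p \<Lambda> Obs \<rho> - second_moment n G p (\<lambda>g. id) Obs \<rho> =
    (\<Sum>a\<in>pidx n. \<Sum>a'\<in>pidx n. Fc n G p Obs a * Fc n G p Obs a' * Qv n G p \<Lambda> \<rho> a a')"
proof -
  let ?F = "Fc n G p Obs"
  have LM: "\<forall>g\<in>G. \<Lambda> g \<rho> \<in> mats (2^n)" using ch Rm by (simp add: quantum_channel_def lin_superop_def)
  have IM: "\<forall>g\<in>G. (\<lambda>g. id) g \<rho> \<in> mats (2^n)" using Rm by simp
  define f where "f g a a' = complex_of_real (p g) * (?F a * ?F a' * (Tm n a a' (\<Lambda> g \<rho>) - Tm n a a' \<rho>))" for g a a'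
  have xi: "\<And>g z. g \<in> G \<Longrightarrow> z \<in> zidx n \<Longrightarrow> Xi n z g \<in> pidx n" using cl Xi_prop by blast
  have "second_moment n G p \<Lambda> Obs \<rho> - second_moment n G p (\<lambda>g. id) Obs \<rho> =
     (\<Sum>g\<in>G. complex_of_real (p g) * (\<Sum>z\<in>zidx n. \<Sum>z'\<in>zidx n. ?F (Xi n z g) * ?F (Xi n z' g) * Tm n (Xi n z g) (Xi n z' g) (\<Lambda> g \<rho>)))
   - (\<Sum>g\<in>G. complex_of_real (p g) * (\<Sum>z\<in>zidx n. \<Sum>z'\<in>zidx n. ?F (Xi n z g) * ?F (Xi n z' g) * Tm n (Xi n z g) (Xi n z' g) \<rho>))"
    unfolding moment_formula[where \<Lambda>=\<Lambda> and \<rho>=\<rho>, OF fin cl pn S LM] moment_formula[where \<Lambda>="\<lambda>g. id" and \<rho>=\<rho>, OF fin cl pn S IM] by simp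
  also have "\<dots> = (\<Sum>g\<in>G. \<Sum>z\<in>zidx n. \<Sum>z'\<in>zidx n. f g (Xi n z g) (Xi n z' g))"
    unfolding sum_subtractf[symmetric]
  proof (rule sum.cong[OF refl])
    fix g assume "g \<in> G"
    show "complex_of_real (p g) * (\<Sum>z\<in>zidx n. \<Sum>z'\<in>zidx n. ?F (Xi n z g) * ?F (Xi n z' g) * Tm n (Xi n z g) (Xi n z' g) (\<Lambda> g \<rho>)) -
          complex_of_real (p g) * (\<Sum>z\<in>zidx n. \<Sum>z'\<in>zidx n. ?F (Xi n z g) * ?F (Xi n z' g) * Tm n (Xi n z g) (Xi n z' g) \<rho>) =
          (\<Sum>z\<in>zidx n. \<Sum>z'\<in>zidx n. f g (Xi n z g) (Xi n z' g))"
      unfolding f_def right_diff_distrib[symmetric] sum_subtractf[symmetric] sum_distrib_left ..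
  qed
  also have "\<dots> = (\<Sum>a\<in>pidx n. \<Sum>a'\<in>pidx n. \<Sum>z\<in>zidx n. \<Sum>z'\<in>zidx n. \<Sum>g\<in>{g\<in>G. Xi n z g = a \<and> Xi n z' g = a'}. f g a a')"
    by (rule regroup[OF fin xi])
  also have "\<dots> = (\<Sum>a\<in>pidx n. \<Sum>a'\<in>pidx n. ?F a * ?F a' * Qv n G p \<Lambda> \<rho> a a')"
    unfolding Qv_def f_def sum_distrib_left by (simp add: mult_ac)
  finally show ?thesis .
qed


lemma sq_sum_helper: "(\<Sum>a\<in>A. \<Sum>b\<in>A. h a * h b / q * K) = (\<Sum>a\<in>A. h a) * (\<Sum>a\<in>A. h a) / q * K" for h :: "_ \<Rightarrow> real"
proof -
  have "(\<Sum>a\<in>A. h a) * (\<Sum>a\<in>A. h a) / q * K = (\<Sum>a\<in>A. \<Sum>b\<in>A. h a * h b) / q * K" by (simp add: sum_product)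
  also have "\<dots> = (\<Sum>a\<in>A. \<Sum>b\<in>A. h a * h b / q * K)" by (simp add: sum_divide_distrib sum_distrib_right)
  finally show ?thesis by simp
qed

theorem proposition5:
  fixes n :: nat and G :: "cmat set" and p :: "cmat \<Rightarrow> real"
    and \<Lambda> :: "cmat \<Rightarrow> superop" and Obs \<rho> :: cmat and C :: real
  assumes G_fin: "finite G"
    and G_cliff: "\<forall>g\<in>G. clifford n g"
    and p_nonneg: "\<forall>g\<in>G. p g \<ge> 0"
    and p_sum: "(\<Sum>g\<in>G. p g) = 1"
    and S_inv: "bij_betw (Sop n G p) (mats (2 ^ n)) (mats (2 ^ n))"
    and channels: "\<forall>g\<in>G. quantum_channel (2 ^ n) (\<Lambda> g)"
    and O_herm: "hermitian (2 ^ n) Obs"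
    and rho_state: "is_state (2 ^ n) \<rho>"
    and C_nonneg: "0 \<le> C"
    and C_bound: "\<forall>a\<in>pidx n. \<forall>a'\<in>pidx n. a \<noteq> a' \<and> hs (2 ^ n) Obs (pauli n a) \<noteq> 0
                     \<and> hs (2 ^ n) Obs (pauli n a') \<noteq> 0
                  \<longrightarrow> \<bar>s2 n G p a a'\<bar> / (s1 n G p a * s1 n G p a') \<le> C"
  shows "cmod (second_moment n G p \<Lambda> Obs \<rho> - second_moment n G p (\<lambda>g. id) Obs \<rho>)
           \<le> C * (stab_norm n Obs)\<^sup>2 *
              Max ((\<lambda>(a, b). diamond (2 ^ n) (superop_diff id (Lbar n G p \<Lambda> a b))) ` (pidx n \<times> pidx n))
       \<and> C * (stab_norm n Obs)\<^sup>2 *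
              Max ((\<lambda>(a, b). diamond (2 ^ n) (superop_diff id (Lbar n G p \<Lambda> a b))) ` (pidx n \<times> pidx n))
           \<le> C * (stab_norm n Obs)\<^sup>2 * Max ((\<lambda>g. diamond (2 ^ n) (superop_diff id (\<Lambda> g))) ` G)"
proof -
  let ?D = "(2::nat)^n"
  let ?h = "\<lambda>a. cmod (hs (2^n) Obs (pauli n a))"
  let ?DL = "Max ((\<lambda>(a, b). diamond (2 ^ n) (superop_diff id (Lbar n G p \<Lambda> a b))) ` (pidx n \<times> pidx n))"
  let ?DG = "Max ((\<lambda>g. diamond (2 ^ n) (superop_diff id (\<Lambda> g))) ` G)"
  have R: "psd (2^n) \<rho>" and trR: "tr (2^n) \<rho> = 1" using rho_state by (auto simp: is_state_def)
  have Rm: "\<rho> \<in> mats (2^n)" using R by (simp add: psd_def)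
  have Gne: "G \<noteq> {}" using p_sum by auto
  have pne: "pidx n \<noteq> {}" by (auto simp: pidx_def intro: exI[of _ "replicate n (False, False)"])
  have finP: "finite (pidx n \<times> pidx n)" by (simp add: finite_pidx)
  have DLge: "diamond (2^n) (superop_diff id (Lbar n G p \<Lambda> a a')) \<le> ?DL" if "a \<in> pidx n" "a' \<in> pidx n" for a a'
    using finP that by (intro Max_ge) auto
  obtain a0 where a0: "a0 \<in> pidx n" using pne by blast
  have DL0: "0 \<le> ?DL" using DLge[OF a0 a0] Lbar_diamond_nonneg[OF G_fin channels G_cliff, of p a0 a0] by linarith
  have stab: "stab_norm n Obs = (\<Sum>a\<in>pidx n. ?h a) / 2^n"
    unfolding stab_norm_def by (simp add: hs_conj[of _ "pauli n _" Obs])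
  have part1: "cmod (second_moment n G p \<Lambda> Obs \<rho> - second_moment n G p (\<lambda>g. id) Obs \<rho>) \<le> C * (stab_norm n Obs)\<^sup>2 * ?DL"
  proof -
    have "cmod (second_moment n G p \<Lambda> Obs \<rho> - second_moment n G p (\<lambda>g. id) Obs \<rho>) \<le>
        (\<Sum>a\<in>pidx n. \<Sum>a'\<in>pidx n. cmod (Fc n G p Obs a * Fc n G p Obs a' * Qv n G p \<Lambda> \<rho> a a'))"
      unfolding diff_formula[OF G_fin G_cliff p_nonneg S_inv channels Rm]
      by (rule order_trans[OF norm_sum sum_mono[OF norm_sum]])
    also have "\<dots> \<le> (\<Sum>a\<in>pidx n. \<Sum>a'\<in>pidx n. ?h a * ?h a' / (2^n)\<^sup>2 * (C * ?DL))"
      by (intro sum_mono term_bound[OF G_fin G_cliff p_nonneg S_inv channels R trR C_nonneg C_bound] DLge DL0)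
    also have "\<dots> = (\<Sum>a\<in>pidx n. ?h a) * (\<Sum>a\<in>pidx n. ?h a) / (2^n)\<^sup>2 * (C * ?DL)"
      by (rule sq_sum_helper)
    also have "\<dots> = C * ((\<Sum>a\<in>pidx n. ?h a) / 2^n)\<^sup>2 * ?DL"
      by (simp add: power2_eq_square)
    finally show ?thesis unfolding stab .
  qed
  have part2: "?DL \<le> ?DG"
  proof (rule Max.boundedI)
    show "finite ((\<lambda>(a, b). diamond (2 ^ n) (superop_diff id (Lbar n G p \<Lambda> a b))) ` (pidx n \<times> pidx n))" using finP by simp
    show "(\<lambda>(a, b). diamond (2 ^ n) (superop_diff id (Lbar n G p \<Lambda> a b))) ` (pidx n \<times> pidx n) \<noteq> {}" using pne by simp
  next
    fix x assume "x \<in> (\<lambda>(a, b). diamond (2 ^ n) (superop_diff id (Lbar n G p \<Lambda> a b))) ` (pidx n \<times> pidx n)"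
    then obtain a b where "x = diamond (2 ^ n) (superop_diff id (Lbar n G p \<Lambda> a b))" by auto
    then show "x \<le> ?DG" using Lbar_diamond_le[OF G_fin channels p_nonneg Gne] by simp
  qed
  have "C * (stab_norm n Obs)\<^sup>2 * ?DL \<le> C * (stab_norm n Obs)\<^sup>2 * ?DG"
    using part2 C_nonneg by (intro mult_left_mono) auto
  with part1 show ?thesis by blast
qed


end
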